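(* Let $\Theta$ be a compact subset of $(0,1/2)\times(\mathbb{R}^2\setminus\Delta)$, $\Delta=\{(x,x):x\in\mathbb{R}\}$. Let $f$ be a symmetric probability density on $\mathbb{R}$ with $f\in\mathbb{L}_2$ and $\int|f^*(u)|^2|u|^{2\beta}du\le L$ for some $\beta>0$, $L>0$. Let $W$ be the cumulative distribution function of a probability measure on $\mathbb{R}$, absolutely continuous with respect to Lebesgue measure with support $\mathbb{R}$, such that $\int(1+|u|+u^2+|u|^3)dW(u)<\infty$. Let $\theta_0=(p_0,\alpha_0,\beta_0)\in\Theta$ and let $X_1,\dots,X_n$ be i.i.d. with density $g(x)=p_0f(x-\alpha_0)+(1-p_0)f(x-\beta_0)$. For $\theta=(p,\alpha,\beta)\in\Theta$ let $M(\theta,u)=pe^{iu\alpha}+(1-p)e^{iu\beta}$, $$S_n(\theta)=\frac{-1}{4n(n-1)}\int_{|u|\le1/h}\sum_{j\ne k,\ j,k=1}^n\left(\frac{e^{iuX_k}}{M(\theta,u)}-\frac{e^{-iuX_k}}{M(\theta,-u)}\right)\left(\frac{e^{iuX_j}}{M(\theta,u)}-\frac{e^{-iuX_j}}{M(\theta,-u)}\right)dW(u),$$ with $h=h_n\to0$ as $n\to\infty$, and let $\hat\theta_n=\arg\min_{\theta\in\Theta}S_n(\theta)$. Then $\hat\theta_n$ converges in probability to $\theta_0$ as $n\to\infty$.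
   Context: $f^*(u)=\int e^{ixu}f(x)\,dx$ denotes the Fourier transform. *)

theory Defs
  imports "HOL-Probability.Probability"
begin

definition fourier_tr :: "(real \<Rightarrow> real) \<Rightarrow> real \<Rightarrow> complex" where
  "fourier_tr f u = (\<integral>x. exp (\<i> * complex_of_real (x * u)) * complex_of_real (f x) \<partial>lborel)"

definition Mchar :: "real \<times> real \<times> real \<Rightarrow> real \<Rightarrow> complex" where
  "Mchar \<theta> u = (case \<theta> of (p, a, b) \<Rightarrow>
      complex_of_real p * exp (\<i> * complex_of_real (u * a))
    + complex_of_real (1 - p) * exp (\<i> * complex_of_real (u * b)))"

definition Efac :: "real \<times> real \<times> real \<Rightarrow> real \<Rightarrow> real \<Rightarrow> complex" where
  "Efac \<theta> u x = exp (\<i> * complex_of_real (u * x)) / Mchar \<theta> u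
              - exp (- \<i> * complex_of_real (u * x)) / Mchar \<theta> (- u)"

text \<open>The contrast S_n(theta) evaluated at the sample point omega; W is the
  probability measure whose CDF is W.  The complex integral is real-valued
  (the integrand is real), so we take its real part.\<close>
definition Sn :: "real measure \<Rightarrow> (nat \<Rightarrow> 'w \<Rightarrow> real) \<Rightarrow> real \<Rightarrow> nat
                   \<Rightarrow> real \<times> real \<times> real \<Rightarrow> 'w \<Rightarrow> real" where
  "Sn W X h n \<theta> \<omega> = Re (complex_of_real (-1 / (4 * real n * (real n - 1))) *
     set_lebesgue_integral W {u. \<bar>u\<bar> \<le> 1 / h}
       (\<lambda>u. \<Sum>(j, k) \<in> {(j, k). j \<in> {1..n} \<and> k \<in> {1..n} \<and> j \<noteq> k}.
              Efac \<theta> u (X k \<omega>) * Efac \<theta> u (X j \<omega>)))"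

end

theory Submission
  imports Defs "HOL-Complex_Analysis.Conformal_Mappings"
begin

lemma exp_sym_eq:
  fixes \<alpha> \<beta> :: real
  assumes "exp \<alpha> + exp (-\<alpha>) = exp \<beta> + exp (-\<beta>)"
  shows "\<alpha> = \<beta> \<or> \<alpha> = -\<beta>"
proof -
  have "(exp \<alpha> - exp \<beta>) * (1 - exp (-(\<alpha>+\<beta>))) = 0"
    using assms by (simp add: algebra_simps exp_add[symmetric] exp_diff exp_minus field_simps)
  then show ?thesis
    by (auto simp: exp_minus)
qed

lemma ident_real:
  fixes p a b p0 a0 b0 :: real
  assumes p: "0 < p" "p < 1/2" and p0: "0 < p0" "p0 < 1/2" and ab: "a \<noteq> b" and ab0: "a0 \<noteq> b0"
  and H: "\<And>t. (p0 * exp (a0*t) + (1-p0) * exp (b0*t)) * (p * exp (a*(-t)) + (1-p) * exp (b*(-t)))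
            = (p0 * exp (a0*(-t)) + (1-p0) * exp (b0*(-t))) * (p * exp (a*t) + (1-p) * exp (b*t))"
  shows "p = p0 \<and> a = a0 \<and> b = b0"
proof -
  define q where "q = 1 - p"
  define q0 where "q0 = 1 - p0"
  define s where "s = (a+b)/2"
  define d where "d = (a-b)/2"
  define s0 where "s0 = (a0+b0)/2"
  define d0 where "d0 = (a0-b0)/2"
  have a: "a = s + d" and b: "b = s - d" and a0: "a0 = s0 + d0" and b0: "b0 = s0 - d0"
    by (simp_all add: s_def d_def s0_def d0_def field_simps)
  have d: "d \<noteq> 0" using ab by (simp add: d_def)
  have d0: "d0 \<noteq> 0" using ab0 by (simp add: d0_def)
  have q: "p < q" "0 < q" using p by (auto simp: q_def)
  have q0: "p0 < q0" "0 < q0" using p0 by (auto simp: q0_def)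
  define N where "N t = p * exp (d*t) + q * exp (-(d*t))" for t
  define N0 where "N0 t = p0 * exp (d0*t) + q0 * exp (-(d0*t))" for t
  have Npos: "N t > 0" for t using p q by (auto simp: N_def intro!: add_pos_pos)
  have N0pos: "N0 t > 0" for t using p0 q0 by (auto simp: N0_def intro!: add_pos_pos)
  have Lf: "p * exp (a*t) + (1-p) * exp (b*t) = exp (s*t) * N t" for t
    by (simp add: a b N_def q_def algebra_simps exp_add exp_diff exp_minus field_simps)
  have L0f: "p0 * exp (a0*t) + (1-p0) * exp (b0*t) = exp (s0*t) * N0 t" for t
    by (simp add: a0 b0 N0_def q0_def algebra_simps exp_add exp_diff exp_minus field_simps)
  have E: "exp (2*(s0-s)*t) * (N0 t * N (-t)) = N0 (-t) * N t" for t
  proof -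
    have "exp (s0*t) * N0 t * (exp (s*(-t)) * N (-t)) = exp (s0*(-t)) * N0 (-t) * (exp (s*t) * N t)"
      using H[of t] by (simp only: Lf L0f)
    then have "exp (s0*t) * exp (s*(-t)) * (N0 t * N (-t)) = exp (s0*(-t)) * exp (s*t) * (N0 (-t) * N t)"
      by (simp add: algebra_simps)
    then have "exp (s0*t) * exp (s*(-t)) * (N0 t * N (-t)) * exp (s0*t) * exp (s*(-t)) = (N0 (-t) * N t)"
      by (simp add: algebra_simps exp_add[symmetric])
    then show ?thesis
      by (simp add: algebra_simps exp_add[symmetric])
  qed
  have Nle: "p * N t \<le> q * N (-t)" for t
  proof -
    have "p*p \<le> q*q" using p q by (intro mult_mono) auto
    then have "p*p*exp (d*t) \<le> q*q*exp(d*t)" by (intro mult_right_mono) auto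
    then show ?thesis by (simp add: N_def algebra_simps)
  qed
  have N0le: "p0 * N0 t \<le> q0 * N0 (-t)" for t
  proof -
    have "p0*p0 \<le> q0*q0" using p0 q0 by (intro mult_mono) auto
    then have "p0*p0*exp (d0*t) \<le> q0*q0*exp(d0*t)" by (intro mult_right_mono) auto
    then show ?thesis by (simp add: N0_def algebra_simps)
  qed
  define U where "U = (q/p) * (q0/p0)"
  have Upos: "U > 0" using p p0 q q0 by (simp add: U_def)
  have bound: "exp (2*(s0-s)*t) \<le> U" for t
  proof -
    have "exp (2*(s0-s)*t) * (N0 t * N (-t)) = N0 (-t) * N t" by (rule E)
    also have "\<dots> \<le> (q0/p0 * N0 t) * (q/p * N (-t))"
    proof (intro mult_mono)
      show "N0 (- t) \<le> q0 / p0 * N0 t" using N0le[of "-t"] p0 by (simp add: field_simps)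
      show "N t \<le> q / p * N (- t)" using Nle[of t] p by (simp add: field_simps)
      show "0 \<le> N t" using Npos[of t] by simp
      show "0 \<le> q0 / p0 * N0 t" using N0pos[of t] p0 q0 by simp
    qed
    also have "\<dots> = U * (N0 t * N (-t))" by (simp add: U_def mult_ac)
    finally show ?thesis using Npos N0pos by (simp add: mult_le_cancel_right)
  qed
  have ss: "s0 = s"
  proof (rule ccontr)
    assume "s0 \<noteq> s"
    define c where "c = 2*(s0-s)"
    have c: "c \<noteq> 0" using \<open>s0 \<noteq> s\<close> by (simp add: c_def)
    define t where "t = (ln U + 1) / c"
    have "exp (c * t) \<le> U" using bound[of t] by (simp add: c_def)
    moreover have "c * t = ln U + 1" using c by (simp add: t_def)
    ultimately have "exp (ln U + 1) \<le> U" by simp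
    then have "U * exp 1 \<le> U" using Upos by (simp add: exp_add)
    moreover have "exp (1::real) > 1" by simp
    ultimately show False using Upos by (smt (verit) mult_less_cancel_left1)
  qed
  have E2: "N0 t * N (-t) = N0 (-t) * N t" for t using E[of t] ss by simp
  define A where "A = p0*p - q0*q"
  define Bc where "Bc = p0*q - q0*p"
  have A: "A \<noteq> 0"
  proof -
    have "p0*p < q0*q" using p p0 q q0 by (intro mult_strict_mono) auto
    then show ?thesis by (simp add: A_def)
  qed
  define \<alpha> where "\<alpha> = d0 - d"
  define \<beta> where "\<beta> = d0 + d"
  have key: "A * (exp (\<alpha>*t) - exp (-(\<alpha>*t))) + Bc * (exp (\<beta>*t) - exp (-(\<beta>*t))) = 0" for t
  proof -
    have "N0 t * N (-t) - N0 (-t) * N t = 0" using E2[of t] by simp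
    then show ?thesis
      by (simp add: N_def N0_def A_def Bc_def \<alpha>_def \<beta>_def algebra_simps exp_add[symmetric] exp_diff[symmetric])
  qed
  have \<alpha>0: "\<alpha> = 0"
  proof (rule ccontr)
    assume "\<alpha> \<noteq> 0"
    have k1: "A * (exp \<alpha> - exp (-\<alpha>)) + Bc * (exp \<beta> - exp (-\<beta>)) = 0" using key[of 1] by simp
    have k2: "A * (exp (2*\<alpha>) - exp (-(2*\<alpha>))) + Bc * (exp (2*\<beta>) - exp (-(2*\<beta>))) = 0"
      using key[of 2] by (simp add: mult.commute)
    have sq: "exp (2*x) - exp (-(2*x)) = (exp x - exp (-x)) * (exp x + exp (-x))" for x :: real
      by (simp add: algebra_simps exp_add[symmetric])
    define X where "X = exp \<alpha> - exp (-\<alpha>)"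
    define Y where "Y = exp \<beta> - exp (-\<beta>)"
    define P where "P = exp \<alpha> + exp (-\<alpha>)"
    define Q where "Q = exp \<beta> + exp (-\<beta>)"
    have h1: "A * X = - Bc * Y" using k1 by (simp add: X_def Y_def)
    have h2: "A * (X * P) = - Bc * (Y * Q)" using k2 unfolding sq X_def Y_def P_def Q_def by simp
    have "A * X * P = A * X * Q"
    proof -
      have "A * X * P = A * (X*P)" by (simp only: mult.assoc)
      also have "\<dots> = - Bc * (Y * Q)" by (rule h2)
      also have "\<dots> = (- Bc * Y) * Q" by (simp only: mult.assoc)
      also have "\<dots> = A * X * Q" by (simp only: h1)
      finally show ?thesis .
    qed
    then have "A * (exp \<alpha> - exp (-\<alpha>)) * (exp \<alpha> + exp (-\<alpha>)) = A * (exp \<alpha> - exp (-\<alpha>)) * (exp \<beta> + exp (-\<beta>))"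
      by (simp add: X_def P_def Q_def)
    moreover have "exp \<alpha> - exp (-\<alpha>) \<noteq> 0"
      using \<open>\<alpha> \<noteq> 0\<close> by auto
    ultimately have "exp \<alpha> + exp (-\<alpha>) = exp \<beta> + exp (-\<beta>)" using A by simp
    then have "\<alpha> = \<beta> \<or> \<alpha> = -\<beta>" by (rule exp_sym_eq)
    then show False using d d0 by (auto simp: \<alpha>_def \<beta>_def)
  qed
  have dd: "d0 = d" using \<alpha>0 by (simp add: \<alpha>_def)
  have "Bc * (exp \<beta> - exp (-\<beta>)) = 0" using key[of 1] \<alpha>0 by simp
  moreover have "exp \<beta> - exp (-\<beta>) \<noteq> 0"
  proof -
    have "\<beta> \<noteq> 0" using d dd by (simp add: \<beta>_def)
    then show ?thesis by auto
  qed
  ultimately have "Bc = 0" by simp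
  then have "p0 = p" by (simp add: Bc_def q_def q0_def algebra_simps)
  then show ?thesis using ss dd a b a0 b0 by simp
qed

definition Mcx :: "real \<Rightarrow> real \<Rightarrow> real \<Rightarrow> complex \<Rightarrow> complex" where
  "Mcx p a b z = of_real p * exp (\<i> * z * of_real a) + of_real (1-p) * exp (\<i> * z * of_real b)"

lemma Mcx_real: "Mcx p a b (of_real u) = Mchar (p,a,b) u"
  by (simp add: Mcx_def Mchar_def mult.assoc)

lemma Mcx_neg_real: "Mcx p a b (- of_real u) = cnj (Mchar (p,a,b) u)"
  by (simp add: Mcx_def Mchar_def exp_cnj mult.assoc)

lemma Mcx_imag: "Mcx p a b (- (\<i> * of_real t)) = of_real (p * exp (a*t) + (1-p) * exp (b*t))"
proof -
  have "\<i> * (- (\<i> * of_real t)) * of_real c = of_real (c*t)" for c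
    by (simp add: algebra_simps)
  moreover have "exp (complex_of_real t * complex_of_real c) = complex_of_real (exp (c*t))" for c
    by (simp only: of_real_mult[symmetric] exp_of_real mult.commute)
  ultimately show ?thesis by (simp add: Mcx_def)
qed

lemma Mcx_imag2: "Mcx p a b (\<i> * of_real t) = of_real (p * exp (a*(-t)) + (1-p) * exp (b*(-t)))"
  using Mcx_imag[of p a b "-t"] by simp

lemma ident_near0:
  fixes p a b p0 a0 b0 \<delta> :: real
  assumes p: "0 < p" "p < 1/2" and p0: "0 < p0" "p0 < 1/2" and ab: "a \<noteq> b" and ab0: "a0 \<noteq> b0"
  and \<delta>: "\<delta> > 0"
  and Z: "\<And>u. \<bar>u\<bar> < \<delta> \<Longrightarrow> Im (Mchar (p0,a0,b0) u * cnj (Mchar (p,a,b) u)) = 0"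
  shows "(p,a,b) = (p0,a0,b0)"
proof -
  define H where "H z = Mcx p0 a0 b0 z * Mcx p a b (-z) - Mcx p0 a0 b0 (-z) * Mcx p a b z" for z
  have hol: "H holomorphic_on UNIV"
    unfolding H_def Mcx_def by (intro holomorphic_intros)
  define U where "U = complex_of_real ` {-\<delta><..<\<delta>}"
  have HU: "H z = 0" if zU: "z \<in> U" for z
  proof -
    obtain u where u: "z = of_real u" "\<bar>u\<bar> < \<delta>" using zU by (auto simp: U_def abs_less_iff)
    have "H z = Mchar (p0,a0,b0) u * cnj (Mchar (p,a,b) u) - cnj (Mchar (p0,a0,b0) u * cnj (Mchar (p,a,b) u))"
      using u by (simp add: H_def Mcx_real Mcx_neg_real mult.commute)
    also have "\<dots> = 0"
      using Z[OF u(2)] by (simp add: complex_eq_iff)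
    finally show ?thesis .
  qed
  have lim: "0 islimpt U"
    unfolding islimpt_approachable
  proof (intro allI impI)
    fix e :: real assume e: "e > 0"
    define x where "x = min \<delta> e / 2"
    have x: "0 < x" "x < \<delta>" "x < e" using e \<delta> by (auto simp: x_def)
    show "\<exists>x'\<in>U. x' \<noteq> 0 \<and> dist x' 0 < e"
      using x by (intro bexI[of _ "of_real x"]) (auto simp: U_def)
  qed
  have H0: "H w = 0" for w
    by (rule analytic_continuation[OF hol open_UNIV connected_UNIV _ _ lim HU]) auto
  have "(p0 * exp (a0*t) + (1-p0) * exp (b0*t)) * (p * exp (a*(-t)) + (1-p) * exp (b*(-t)))
            = (p0 * exp (a0*(-t)) + (1-p0) * exp (b0*(-t))) * (p * exp (a*t) + (1-p) * exp (b*t))" for t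
  proof -
    have "H (- (\<i> * of_real t)) = 0" by (rule H0)
    then have "complex_of_real ((p0 * exp (a0*t) + (1-p0) * exp (b0*t)) * (p * exp (a*(-t)) + (1-p) * exp (b*(-t)))
            - (p0 * exp (a0*(-t)) + (1-p0) * exp (b0*(-t))) * (p * exp (a*t) + (1-p) * exp (b*t))) = 0"
      unfolding H_def minus_minus Mcx_imag Mcx_imag2 by simp
    then show ?thesis by (simp only: of_real_eq_0_iff)
  qed
  from ident_real[OF p p0 ab ab0 this] show ?thesis by simp
qed

definition Yf :: "real \<times> real \<times> real \<Rightarrow> real \<Rightarrow> real \<Rightarrow> real" where
  "Yf \<theta> u x = Im (exp (\<i> * complex_of_real (u * x)) / Mchar \<theta> u)"

lemma Mchar_neg: "Mchar \<theta> (- u) = cnj (Mchar \<theta> u)"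
  by (cases \<theta>) (simp add: Mchar_def exp_cnj)

lemma Efac_eq: "Efac \<theta> u x = 2 * \<i> * complex_of_real (Yf \<theta> u x)"
proof -
  define z where "z = exp (\<i> * complex_of_real (u * x)) / Mchar \<theta> u"
  have "exp (- \<i> * complex_of_real (u * x)) / Mchar \<theta> (- u) = cnj z"
    by (simp add: z_def Mchar_neg exp_cnj)
  then have "Efac \<theta> u x = z - cnj z" by (simp add: Efac_def z_def)
  also have "\<dots> = 2 * \<i> * complex_of_real (Im z)" by (simp add: complex_eq_iff)
  finally show ?thesis by (simp add: Yf_def z_def)
qed

lemma Efac_mult: "Efac \<theta> u x * Efac \<theta> u y = complex_of_real (-4 * (Yf \<theta> u x * Yf \<theta> u y))"
proof -
  have "(2 * \<i> * a) * (2 * \<i> * b) = - 4 * (a * b)" for a b :: complex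
    by (simp add: complex_eq_iff algebra_simps)
  then show ?thesis by (simp add: Efac_eq)
qed

lemma pair_sum:
  fixes y :: "nat \<Rightarrow> real"
  shows "(\<Sum>(j, k) \<in> {(j, k). j \<in> {1..n} \<and> k \<in> {1..n} \<and> j \<noteq> k}. y k * y j)
       = (\<Sum>j\<in>{1..n}. y j)^2 - (\<Sum>j\<in>{1..n}. (y j)^2)"
proof -
  define P where "P = {(j, k). j \<in> {1..n} \<and> k \<in> {1..n} \<and> j \<noteq> k}"
  define D where "D = (\<lambda>j. (j,j)) ` {1..n}"
  have PD: "{1..n} \<times> {1..n} = P \<union> D" "P \<inter> D = {}"
    by (auto simp: P_def D_def)
  have fin: "finite P" "finite D" by (auto simp: P_def D_def intro: finite_subset[of _ "{1..n}\<times>{1..n}"])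
  have "(\<Sum>j\<in>{1..n}. y j)^2 = (\<Sum>(j,k)\<in>{1..n} \<times> {1..n}. y k * y j)"
    by (simp add: power2_eq_square sum_product sum.cartesian_product mult.commute)
  also have "\<dots> = (\<Sum>(j,k)\<in>P. y k * y j) + (\<Sum>(j,k)\<in>D. y k * y j)"
    unfolding PD(1) by (rule sum.union_disjoint[OF fin PD(2)])
  also have "(\<Sum>(j,k)\<in>D. y k * y j) = (\<Sum>j\<in>{1..n}. (y j)^2)"
    unfolding D_def by (subst sum.reindex) (auto simp: inj_on_def power2_eq_square)
  finally show ?thesis by (simp add: P_def)
qed

definition Pf :: "(nat \<Rightarrow> 'w \<Rightarrow> real) \<Rightarrow> nat \<Rightarrow> real \<times> real \<times> real \<Rightarrow> 'w \<Rightarrow> real \<Rightarrow> real" where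
  "Pf X n \<theta> \<omega> u = (\<Sum>j\<in>{1..n}. Yf \<theta> u (X j \<omega>))^2 - (\<Sum>j\<in>{1..n}. (Yf \<theta> u (X j \<omega>))^2)"

lemma Sn_eq:
  "Sn W X h n \<theta> \<omega> = 1 / (real n * (real n - 1)) *
      (\<integral>u. indicator {u. \<bar>u\<bar> \<le> 1 / h} u * Pf X n \<theta> \<omega> u \<partial>W)"
proof -
  have sum: "(\<Sum>(j, k) \<in> {(j, k). j \<in> {1..n} \<and> k \<in> {1..n} \<and> j \<noteq> k}.
              Efac \<theta> u (X k \<omega>) * Efac \<theta> u (X j \<omega>)) = complex_of_real (-4 * Pf X n \<theta> \<omega> u)" for u
  proof -
    have "(\<Sum>(j, k) \<in> {(j, k). j \<in> {1..n} \<and> k \<in> {1..n} \<and> j \<noteq> k}.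
              Efac \<theta> u (X k \<omega>) * Efac \<theta> u (X j \<omega>)) =
          (\<Sum>(j, k) \<in> {(j, k). j \<in> {1..n} \<and> k \<in> {1..n} \<and> j \<noteq> k}.
              complex_of_real (-4 * (Yf \<theta> u (X k \<omega>) * Yf \<theta> u (X j \<omega>))))"
      by (intro sum.cong refl) (auto simp: Efac_mult)
    also have "\<dots> = complex_of_real (\<Sum>(j, k) \<in> {(j, k). j \<in> {1..n} \<and> k \<in> {1..n} \<and> j \<noteq> k}.
              -4 * (Yf \<theta> u (X k \<omega>) * Yf \<theta> u (X j \<omega>)))"
      by (simp only: case_prod_unfold of_real_sum)
    also have "\<dots> = complex_of_real (-4 * (\<Sum>(j, k) \<in> {(j, k). j \<in> {1..n} \<and> k \<in> {1..n} \<and> j \<noteq> k}.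
              Yf \<theta> u (X k \<omega>) * Yf \<theta> u (X j \<omega>)))"
      by (simp only: case_prod_unfold sum_distrib_left)
    also have "\<dots> = complex_of_real (-4 * Pf X n \<theta> \<omega> u)"
      by (simp only: pair_sum[of "\<lambda>j. Yf \<theta> u (X j \<omega>)"] Pf_def)
    finally show ?thesis .
  qed
  have "set_lebesgue_integral W {u. \<bar>u\<bar> \<le> 1 / h}
       (\<lambda>u. \<Sum>(j, k) \<in> {(j, k). j \<in> {1..n} \<and> k \<in> {1..n} \<and> j \<noteq> k}.
              Efac \<theta> u (X k \<omega>) * Efac \<theta> u (X j \<omega>))
     = complex_of_real (\<integral>u. indicator {u. \<bar>u\<bar> \<le> 1 / h} u * (-4 * Pf X n \<theta> \<omega> u) \<partial>W)"
    unfolding sum set_lebesgue_integral_def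
    by (simp add: scaleR_conv_of_real del: of_real_mult flip: of_real_mult integral_complex_of_real)
  moreover have "(\<integral>u. indicator {u. \<bar>u\<bar> \<le> 1 / h} u * (-4 * Pf X n \<theta> \<omega> u) \<partial>W)
     = -4 * (\<integral>u. indicator {u. \<bar>u\<bar> \<le> 1 / h} u * Pf X n \<theta> \<omega> u \<partial>W)"
  proof -
    have "(\<lambda>u. indicator {u. \<bar>u\<bar> \<le> 1 / h} u * (-4 * Pf X n \<theta> \<omega> u))
        = (\<lambda>u. -4 * (indicator {u. \<bar>u\<bar> \<le> 1 / h} u * Pf X n \<theta> \<omega> u))"
      by (simp add: fun_eq_iff mult_ac)
    then show ?thesis by (simp only: integral_mult_right_zero)
  qed
  ultimately have "Sn W X h n \<theta> \<omega> = Re (complex_of_real (-1 / (4 * real n * (real n - 1))) *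
       complex_of_real (-4 * (\<integral>u. indicator {u. \<bar>u\<bar> \<le> 1 / h} u * Pf X n \<theta> \<omega> u \<partial>W)))"
    by (simp only: Sn_def)
  also have "\<dots> = (-1 / (4 * real n * (real n - 1))) * (-4 * (\<integral>u. indicator {u. \<bar>u\<bar> \<le> 1 / h} u * Pf X n \<theta> \<omega> u \<partial>W))"
    by (simp only: of_real_mult[symmetric] Re_complex_of_real)
  also have "\<dots> = 1 / (real n * (real n - 1)) * (\<integral>u. indicator {u. \<bar>u\<bar> \<le> 1 / h} u * Pf X n \<theta> \<omega> u \<partial>W)"
  proof -
    have aux: "-1 / (4 * x) * (-4 * I) = 1/x * I" for x I :: real
      by (cases "x=0") (simp_all add: field_simps)
    show ?thesis using aux[of "real n * (real n - 1)"] by (simp only: mult.assoc)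
  qed
  finally show ?thesis .
qed

lemma norm_Mchar_ge:
  assumes "0 \<le> p" "p \<le> 1/2"
  shows "1 - 2*p \<le> cmod (Mchar (p,a,b) u)"
proof -
  have "cmod (of_real (1-p) * exp (\<i> * complex_of_real (u * b))) - cmod ((of_real p * exp (\<i> * complex_of_real (u * a))))
     \<le> cmod (of_real (1-p) * exp (\<i> * complex_of_real (u * b)) + ((of_real p * exp (\<i> * complex_of_real (u * a)))))"
    by (rule norm_diff_ineq)
  moreover have "cmod (of_real (1-p) * exp (\<i> * complex_of_real (u * b))) = 1 - p"
    using assms by (simp add: norm_mult norm_of_real del: of_real_diff)
  moreover have "cmod ((of_real p * exp (\<i> * complex_of_real (u * a)))) = p"
    using assms by (simp add: norm_mult)
  ultimately show ?thesis by (simp add: Mchar_def add.commute)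
qed

lemma cmod_iexp_diff: "cmod (exp (\<i> * complex_of_real x) - exp (\<i> * complex_of_real y)) \<le> \<bar>x - y\<bar>"
proof -
  have "exp (\<i> * complex_of_real x) - exp (\<i> * complex_of_real y)
      = exp (\<i> * complex_of_real y) * (exp (\<i> * complex_of_real (x - y)) - 1)"
    by (simp add: algebra_simps exp_add[symmetric])
  then have "cmod (exp (\<i> * complex_of_real x) - exp (\<i> * complex_of_real y)) = cmod (exp (\<i> * complex_of_real (x - y)) - 1)"
    by (simp add: norm_mult)
  also have "\<dots> \<le> \<bar>x - y\<bar>"
    using iexp_approx1[of "x - y" 0] by simp
  finally show ?thesis .
qed

lemma Mchar_lip:
  fixes p a b p' a' b' :: real
  assumes "0 \<le> p'" "p' \<le> 1"
  shows "cmod (Mchar (p,a,b) u - Mchar (p',a',b') u) \<le> (2 + 2*\<bar>u\<bar>) * dist (p,a,b) (p',a',b')"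
proof -
  define ea where "ea = exp (\<i> * complex_of_real (u * a))"
  define ea' where "ea' = exp (\<i> * complex_of_real (u * a'))"
  define eb where "eb = exp (\<i> * complex_of_real (u * b))"
  define eb' where "eb' = exp (\<i> * complex_of_real (u * b'))"
  define r where "r = dist (p,a,b) (p',a',b')"
  have dp: "\<bar>p - p'\<bar> \<le> r" using dist_fst_le[of "(p,a,b)" "(p',a',b')"] by (simp add: r_def dist_real_def)
  have dab: "dist (a,b) (a',b') \<le> r" using dist_snd_le[of "(p,a,b)" "(p',a',b')"] by (simp add: r_def)
  have da: "\<bar>a - a'\<bar> \<le> r" using dab dist_fst_le[of "(a,b)" "(a',b')"] by (simp add: dist_real_def)
  have db: "\<bar>b - b'\<bar> \<le> r" using dab dist_snd_le[of "(a,b)" "(a',b')"] by (simp add: dist_real_def)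
  have na: "cmod (ea - ea') \<le> \<bar>u\<bar> * r"
  proof -
    have "cmod (ea - ea') \<le> \<bar>u*a - u*a'\<bar>" unfolding ea_def ea'_def by (rule cmod_iexp_diff)
    also have "\<dots> = \<bar>u\<bar> * \<bar>a - a'\<bar>" by (simp add: abs_mult[symmetric] algebra_simps)
    also have "\<dots> \<le> \<bar>u\<bar> * r" using da by (intro mult_left_mono) auto
    finally show ?thesis .
  qed
  have nb: "cmod (eb - eb') \<le> \<bar>u\<bar> * r"
  proof -
    have "cmod (eb - eb') \<le> \<bar>u*b - u*b'\<bar>" unfolding eb_def eb'_def by (rule cmod_iexp_diff)
    also have "\<dots> = \<bar>u\<bar> * \<bar>b - b'\<bar>" by (simp add: abs_mult[symmetric] algebra_simps)
    also have "\<dots> \<le> \<bar>u\<bar> * r" using db by (intro mult_left_mono) auto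
    finally show ?thesis .
  qed
  have "Mchar (p,a,b) u - Mchar (p',a',b') u =
      of_real (p - p') * ea + of_real p' * (ea - ea') + of_real (p' - p) * eb + of_real (1 - p') * (eb - eb')"
    by (simp add: Mchar_def ea_def ea'_def eb_def eb'_def algebra_simps)
  also have "cmod \<dots> \<le> cmod (of_real (p - p') * ea) + cmod (of_real p' * (ea - ea')) + cmod (of_real (p' - p) * eb) + cmod (of_real (1 - p') * (eb - eb'))"
    by (intro order.trans[OF norm_triangle_ineq] add_mono order_refl) 
  also have "\<dots> = \<bar>p - p'\<bar> + p' * cmod (ea - ea') + \<bar>p - p'\<bar> + (1-p') * cmod (eb - eb')"
    using assms by (simp add: norm_mult ea_def eb_def norm_of_real abs_minus_commute del: of_real_diff)
  also have "\<dots> \<le> r + 1 * (\<bar>u\<bar> * r) + r + 1 * (\<bar>u\<bar> * r)"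
    using assms dp na nb by (intro add_mono mult_mono) auto
  also have "\<dots> = (2 + 2*\<bar>u\<bar>) * r" by (simp add: algebra_simps)
  finally show ?thesis by (simp add: r_def)
qed

lemma Yf_bound:
  assumes "0 < c" "c \<le> cmod (Mchar \<theta> u)"
  shows "\<bar>Yf \<theta> u x\<bar> \<le> 1 / c"
proof -
  have "\<bar>Yf \<theta> u x\<bar> \<le> cmod (exp (\<i> * complex_of_real (u * x)) / Mchar \<theta> u)"
    unfolding Yf_def by (rule abs_Im_le_cmod)
  also have "\<dots> = 1 / cmod (Mchar \<theta> u)" by (simp add: norm_divide)
  also have "\<dots> \<le> 1 / c" using assms by (intro divide_left_mono mult_pos_pos) auto
  finally show ?thesis .
qed

lemma Yf_lip:
  assumes "0 < c" "c \<le> cmod (Mchar \<theta> u)" "c \<le> cmod (Mchar \<theta>' u)"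
    and "cmod (Mchar \<theta> u - Mchar \<theta>' u) \<le> K"
  shows "\<bar>Yf \<theta> u x - Yf \<theta>' u x\<bar> \<le> K / c^2"
proof -
  define e where "e = exp (\<i> * complex_of_real (u * x))"
  have M0: "Mchar \<theta> u \<noteq> 0" "Mchar \<theta>' u \<noteq> 0" using assms by auto
  have K0: "0 \<le> K" using assms(4) norm_ge_zero order_trans by blast
  have "\<bar>Yf \<theta> u x - Yf \<theta>' u x\<bar> = \<bar>Im (e / Mchar \<theta> u - e / Mchar \<theta>' u)\<bar>" by (simp add: Yf_def e_def)
  also have "\<dots> \<le> cmod (e / Mchar \<theta> u - e / Mchar \<theta>' u)" by (rule abs_Im_le_cmod)
  also have "e / Mchar \<theta> u - e / Mchar \<theta>' u = e * (Mchar \<theta>' u - Mchar \<theta> u) / (Mchar \<theta> u * Mchar \<theta>' u)"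
    using M0 by (simp add: field_simps)
  also have "cmod \<dots> = cmod (Mchar \<theta> u - Mchar \<theta>' u) / (cmod (Mchar \<theta> u) * cmod (Mchar \<theta>' u))"
    by (simp add: norm_mult norm_divide e_def norm_minus_commute)
  also have "\<dots> \<le> K / (c * c)"
    using assms K0 by (intro frac_le mult_mono mult_pos_pos) auto
  finally show ?thesis by (simp add: power2_eq_square)
qed

locale mixsetup =
  fixes f :: "real \<Rightarrow> real" and M :: "'w measure" and X :: "nat \<Rightarrow> 'w \<Rightarrow> real"
    and p0 \<alpha>0 \<beta>0 :: real
  assumes f_meas[measurable]: "f \<in> borel_measurable borel"
    and f_nonneg: "\<And>x. 0 \<le> f x"
    and f_dens: "(\<integral>\<^sup>+ x. ennreal (f x) \<partial>lborel) = 1"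
    and f_symm: "\<And>x. f (- x) = f x"
    and M_prob: "prob_space M"
    and X_distr: "\<And>i. distributed M lborel (X i)
                    (\<lambda>x. ennreal (p0 * f (x - \<alpha>0) + (1 - p0) * f (x - \<beta>0)))"
    and p0: "0 < p0" "p0 < 1/2"
begin

definition "g x = p0 * f (x - \<alpha>0) + (1 - p0) * f (x - \<beta>0)"
definition "Dg = density lborel (\<lambda>x. ennreal (g x))"
definition "Df = density lborel (\<lambda>x. ennreal (f x))"
definition "\<Phi> u = char Df u"

lemma g_meas[measurable]: "g \<in> borel_measurable borel"
  unfolding g_def by measurable

lemma g_nonneg: "0 \<le> g x"
  using p0 f_nonneg[of "x - \<alpha>0"] f_nonneg[of "x - \<beta>0"] by (simp add: g_def)

lemma X_meas[measurable]: "X i \<in> borel_measurable M"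
  using X_distr[of i] unfolding distributed_def by (simp add: measurable_lborel2)

lemma distr_X: "distr M lborel (X i) = Dg"
  using distributed_distr_eq_density[OF X_distr[of i]] by (simp add: Dg_def g_def)

lemma sets_Dg[measurable_cong, simp]: "sets Dg = sets borel"
  by (simp add: Dg_def)

lemma prob_Dg: "prob_space Dg"
proof -
  have "prob_space (distr M lborel (X 0))"
    by (rule prob_space.prob_space_distr[OF M_prob]) simp
  then show ?thesis by (simp add: distr_X)
qed

lemma f_int: "integrable lborel f"
  by (rule integrableI_nn_integral_finite[where x=1]) (auto simp: f_dens f_nonneg)

lemma real_distr_Df: "real_distribution Df"
proof -
  have "prob_space Df"
  proof
    show "emeasure Df (space Df) = 1"
      by (simp add: Df_def emeasure_density f_dens del: nn_integral_indicator_singleton)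
  qed
  then show ?thesis
    unfolding real_distribution_def real_distribution_axioms_def by (simp add: Df_def)
qed

lemma Phi_eq: "\<Phi> u = (\<integral>y. f y *\<^sub>R exp (\<i> * complex_of_real (u * y)) \<partial>lborel)"
  unfolding \<Phi>_def char_def Df_def
  by (subst integral_density) (auto simp: f_nonneg)

lemma shift_int:
  "(\<integral>x. f (x - a) *\<^sub>R exp (\<i> * complex_of_real (u * x)) \<partial>lborel)
     = exp (\<i> * complex_of_real (u * a)) * \<Phi> u"
proof -
  have "(\<integral>x. f (x - a) *\<^sub>R exp (\<i> * complex_of_real (u * x)) \<partial>lborel)
     = \<bar>1\<bar> *\<^sub>R (\<integral>y. f ((a + 1 * y) - a) *\<^sub>R exp (\<i> * complex_of_real (u * (a + 1 * y))) \<partial>lborel)"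
    by (rule lborel_integral_real_affine) simp
  also have "\<dots> = (\<integral>y. exp (\<i> * complex_of_real (u * a)) * (f y *\<^sub>R exp (\<i> * complex_of_real (u * y))) \<partial>lborel)"
    unfolding abs_one scaleR_one by (intro Bochner_Integration.integral_cong refl) (simp add: algebra_simps exp_add[symmetric])
  also have "\<dots> = exp (\<i> * complex_of_real (u * a)) * \<Phi> u"
    unfolding Phi_eq by (rule integral_mult_right_zero)
  finally show ?thesis .
qed

lemma shift_integrable:
  "integrable lborel (\<lambda>x. f (x - a) *\<^sub>R exp (\<i> * complex_of_real (u * x)))"
proof -
  have "integrable lborel (\<lambda>x. f (-a + 1 * x))"
    by (rule lborel_integrable_real_affine[OF f_int]) simp
  then have fi: "integrable lborel (\<lambda>x. f (x - a))" by simp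
  show ?thesis
    by (rule Bochner_Integration.integrable_bound[OF fi]) (auto simp: norm_mult f_nonneg)
qed

lemma char_Dg: "char Dg u = Mchar (p0, \<alpha>0, \<beta>0) u * \<Phi> u"
proof -
  have "char Dg u = (\<integral>x. g x *\<^sub>R exp (\<i> * complex_of_real (u * x)) \<partial>lborel)"
    unfolding char_def Dg_def by (subst integral_density) (auto simp: g_nonneg)
  also have "\<dots> = (\<integral>x. p0 *\<^sub>R (f (x - \<alpha>0) *\<^sub>R exp (\<i> * complex_of_real (u * x)))
                    + (1 - p0) *\<^sub>R (f (x - \<beta>0) *\<^sub>R exp (\<i> * complex_of_real (u * x))) \<partial>lborel)"
    by (intro Bochner_Integration.integral_cong refl) (simp add: g_def scaleR_add_left)
  also have "\<dots> = p0 *\<^sub>R (\<integral>x. f (x - \<alpha>0) *\<^sub>R exp (\<i> * complex_of_real (u * x)) \<partial>lborel)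
                 + (1 - p0) *\<^sub>R (\<integral>x. f (x - \<beta>0) *\<^sub>R exp (\<i> * complex_of_real (u * x)) \<partial>lborel)"
  proof -
    have i1: "integrable lborel (\<lambda>x. p0 *\<^sub>R (f (x - \<alpha>0) *\<^sub>R exp (\<i> * complex_of_real (u * x))))"
      by (rule integrable_scaleR_right[OF shift_integrable])
    have i2: "integrable lborel (\<lambda>x. (1 - p0) *\<^sub>R (f (x - \<beta>0) *\<^sub>R exp (\<i> * complex_of_real (u * x))))"
      by (rule integrable_scaleR_right[OF shift_integrable])
    show ?thesis by (simp only: Bochner_Integration.integral_add[OF i1 i2] integral_scaleR_right)
  qed
  also have "\<dots> = Mchar (p0, \<alpha>0, \<beta>0) u * \<Phi> u"
    unfolding shift_int by (simp add: Mchar_def scaleR_conv_of_real algebra_simps)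
  finally show ?thesis .
qed

lemma Phi_real: "Im (\<Phi> u) = 0"
proof -
  have "\<Phi> (- u) = \<bar>-1\<bar> *\<^sub>R (\<integral>y. f (0 + -1 * y) *\<^sub>R exp (\<i> * complex_of_real (- u * (0 + -1 * y))) \<partial>lborel)"
    unfolding Phi_eq by (rule lborel_integral_real_affine) simp
  also have "\<dots> = \<Phi> u" by (simp add: Phi_eq f_symm)
  finally have 1: "\<Phi> (- u) = \<Phi> u" .
  have "\<Phi> (- u) = (\<integral>y. cnj (f y *\<^sub>R exp (\<i> * complex_of_real (u * y))) \<partial>lborel)"
    unfolding Phi_eq by (intro Bochner_Integration.integral_cong refl) (simp add: exp_cnj scaleR_conv_of_real)
  also have "\<dots> = cnj (\<Phi> u)" unfolding Phi_eq by (rule Bochner_Integration.integral_cnj)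
  finally have "cnj (\<Phi> u) = \<Phi> u" using 1 by simp
  then show ?thesis by (simp add: complex_eq_iff)
qed

lemma Phi_cont: "isCont \<Phi> u"
  unfolding \<Phi>_def using real_distribution.isCont_char[OF real_distr_Df] .

lemma Phi_0: "\<Phi> 0 = 1"
  unfolding \<Phi>_def using real_distribution.char_zero[OF real_distr_Df] .

definition mu :: "real \<times> real \<times> real \<Rightarrow> real \<Rightarrow> real" where
  "mu \<theta> u = Re (\<Phi> u) * Im (Mchar (p0, \<alpha>0, \<beta>0) u * cnj (Mchar \<theta> u)) / (cmod (Mchar \<theta> u))\<^sup>2"

lemma Yf_meas[measurable]: "Yf \<theta> u \<in> borel_measurable borel"
  unfolding Yf_def by measurable

lemma E_Yf: "(\<integral>\<omega>. Yf \<theta> u (X j \<omega>) \<partial>M) = mu \<theta> u"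
proof -
  have "(\<integral>\<omega>. Yf \<theta> u (X j \<omega>) \<partial>M) = (\<integral>x. Yf \<theta> u x \<partial>Dg)"
    by (simp add: distr_X[of j, symmetric] integral_distr)
  also have "\<dots> = Im (\<integral>x. exp (\<i> * complex_of_real (u * x)) / Mchar \<theta> u \<partial>Dg)"
  proof -
    have "integrable Dg (\<lambda>x. exp (\<i> * complex_of_real (u * x)) / Mchar \<theta> u)"
      by (intro finite_measure.integrable_const_bound[OF prob_space.finite_measure[OF prob_Dg], where B="1 / cmod (Mchar \<theta> u)"])
         (auto simp: norm_divide)
    then show ?thesis unfolding Yf_def by (rule integral_Im)
  qed
  also have "\<dots> = Im (char Dg u / Mchar \<theta> u)"
    by (simp add: char_def)
  also have "\<dots> = mu \<theta> u"
  proof -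
    have R: "\<Phi> u = complex_of_real (Re (\<Phi> u))" using Phi_real[of u] by (simp add: complex_eq_iff)
    have "char Dg u / Mchar \<theta> u = (Mchar (p0, \<alpha>0, \<beta>0) u * \<Phi> u * cnj (Mchar \<theta> u)) / complex_of_real ((cmod (Mchar \<theta> u))\<^sup>2)"
      unfolding char_Dg by (subst complex_div_cnj) simp
    also have "\<dots> = complex_of_real (Re (\<Phi> u)) * (Mchar (p0, \<alpha>0, \<beta>0) u * cnj (Mchar \<theta> u)) / complex_of_real ((cmod (Mchar \<theta> u))\<^sup>2)"
      by (subst R) (simp only: mult_ac)
    finally show ?thesis
      unfolding mu_def by (simp only: Im_divide_of_real) simp
  qed
  finally show ?thesis .
qed

end

lemma Mchar_cont: "continuous_on UNIV (Mchar \<theta>)"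
  by (cases \<theta>) (auto simp: Mchar_def intro!: continuous_intros)

lemma Mchar_isCont: "isCont (Mchar \<theta>) u"
  using Mchar_cont continuous_on_eq_continuous_at by blast

lemma Mchar_meas[measurable]: "Mchar \<theta> \<in> borel_measurable borel"
  using Mchar_cont[of \<theta>] by (rule borel_measurable_continuous_onI)

lemma Yf_meas2[measurable]:
  assumes [measurable]: "a \<in> borel_measurable N" "b \<in> borel_measurable N"
  shows "(\<lambda>x. Yf \<theta> (a x) (b x)) \<in> borel_measurable N"
  unfolding Yf_def by measurable

locale mainsetup = mixsetup f M X p0 \<alpha>0 \<beta>0
  for f :: "real \<Rightarrow> real" and M :: "'w measure" and X :: "nat \<Rightarrow> 'w \<Rightarrow> real"
    and p0 \<alpha>0 \<beta>0 :: real +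
  fixes \<Theta> :: "(real \<times> real \<times> real) set" and W :: "real measure"
  assumes Theta_compact: "compact \<Theta>"
    and Theta_sub: "\<Theta> \<subseteq> {(p, a, b). 0 < p \<and> p < 1/2 \<and> a \<noteq> b}"
    and theta0: "(p0, \<alpha>0, \<beta>0) \<in> \<Theta>"
    and W_prob: "prob_space W"
    and W_sets[measurable_cong]: "sets W = sets borel"
    and W_support: "\<And>U. open U \<Longrightarrow> U \<noteq> {} \<Longrightarrow> emeasure W U > 0"
    and W_moment: "integrable W (\<lambda>u. 1 + \<bar>u\<bar> + u\<^sup>2 + \<bar>u\<bar> ^ 3)"
    and X_indep: "prob_space.indep_vars M (\<lambda>_. borel) X UNIV"
begin

lemma Theta_p: "\<theta> \<in> \<Theta> \<Longrightarrow> 0 < fst \<theta> \<and> fst \<theta> < 1/2"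
  using Theta_sub by auto

lemma exists_pmax: "\<exists>pm. pm < 1/2 \<and> (\<forall>\<theta>\<in>\<Theta>. fst \<theta> \<le> pm)"
proof -
  have c: "compact (fst ` \<Theta>)"
    by (rule compact_continuous_image[OF continuous_on_fst[OF continuous_on_id] Theta_compact])
  have "fst ` \<Theta> \<noteq> {}" using theta0 by auto
  from compact_attains_sup[OF c this] obtain s where s: "s \<in> fst ` \<Theta>" "\<forall>t\<in>fst ` \<Theta>. t \<le> s" by blast
  then obtain \<theta>s where "\<theta>s \<in> \<Theta>" "s = fst \<theta>s" by auto
  then have "s < 1/2" using Theta_p by auto
  then show ?thesis using s by auto
qed

definition "pm = (SOME pm. pm < 1/2 \<and> (\<forall>\<theta>\<in>\<Theta>. fst \<theta> \<le> pm))"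
definition "c = 1 - 2 * pm"
definition "B = 1 / c"
definition "mm u = 1 + \<bar>u\<bar> + u\<^sup>2 + \<bar>u\<bar> ^ 3" for u :: real
definition "mom = (\<integral>u. mm u \<partial>W)"

lemma pm: "pm < 1/2" "\<And>\<theta>. \<theta> \<in> \<Theta> \<Longrightarrow> fst \<theta> \<le> pm"
  using someI_ex[OF exists_pmax] by (auto simp: pm_def)

lemma c_pos: "0 < c" using pm by (simp add: c_def)
lemma B_pos: "0 < B" using c_pos by (simp add: B_def)

lemma M_ge: "\<theta> \<in> \<Theta> \<Longrightarrow> c \<le> cmod (Mchar \<theta> u)"
proof -
  assume th: "\<theta> \<in> \<Theta>"
  obtain p a b where \<theta>: "\<theta> = (p,a,b)" by (cases \<theta>)
  have p: "0 < p" "p < 1/2" "p \<le> pm" using Theta_p[OF th] pm(2)[OF th] by (auto simp: \<theta>)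
  have "1 - 2*p \<le> cmod (Mchar (p,a,b) u)" using p by (intro norm_Mchar_ge) auto
  then show ?thesis using p by (simp add: c_def \<theta>)
qed

lemma Yb: "\<theta> \<in> \<Theta> \<Longrightarrow> \<bar>Yf \<theta> u x\<bar> \<le> B"
  unfolding B_def by (rule Yf_bound[OF c_pos M_ge])

lemma Ylip: "\<theta> \<in> \<Theta> \<Longrightarrow> \<theta>' \<in> \<Theta> \<Longrightarrow> \<bar>Yf \<theta> u x - Yf \<theta>' u x\<bar> \<le> (2 + 2*\<bar>u\<bar>) * dist \<theta> \<theta>' / c^2"
proof -
  assume th: "\<theta> \<in> \<Theta>" and th': "\<theta>' \<in> \<Theta>"
  obtain p a b where \<theta>: "\<theta> = (p,a,b)" by (cases \<theta>)
  obtain p' a' b' where \<theta>': "\<theta>' = (p',a',b')" by (cases \<theta>')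
  have p': "0 \<le> p'" "p' \<le> 1" using Theta_p[OF th'] by (auto simp: \<theta>')
  show ?thesis
    by (rule Yf_lip[OF c_pos M_ge[OF th] M_ge[OF th']]) (use Mchar_lip[OF p', of p a b u a' b'] in \<open>simp add: \<theta> \<theta>'\<close>)
qed

lemma M_finite: "finite_measure M"
  using M_prob by (simp add: prob_space_def)

lemma intY: "\<theta> \<in> \<Theta> \<Longrightarrow> integrable M (\<lambda>\<omega>. Yf \<theta> u (X j \<omega>))"
  by (rule finite_measure.integrable_const_bound[OF M_finite, where B=B]) (auto simp: Yb)

lemma abs_int_le_const:
  fixes F :: "'a \<Rightarrow> real"
  assumes P: "prob_space P" and F: "F \<in> borel_measurable P" and b: "\<And>x. \<bar>F x\<bar> \<le> K"
  shows "\<bar>\<integral>x. F x \<partial>P\<bar> \<le> K"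
proof -
  have fm: "finite_measure P" using P by (simp add: prob_space_def)
  have iF: "integrable P F"
    by (rule finite_measure.integrable_const_bound[OF fm, where B=K]) (use b F in auto)
  have "\<bar>\<integral>x. F x \<partial>P\<bar> \<le> (\<integral>x. \<bar>F x\<bar> \<partial>P)" by (rule integral_abs_bound)
  also have "\<dots> \<le> (\<integral>x. K \<partial>P)"
    by (rule integral_mono) (use iF b fm in \<open>auto intro: finite_measure.integrable_const\<close>)
  also have "\<dots> = K" using P by (simp add: prob_space.prob_space)
  finally show ?thesis .
qed

lemma mu_E: "mu \<theta> u = (\<integral>\<omega>. Yf \<theta> u (X j \<omega>) \<partial>M)"
  by (simp add: E_Yf)

lemma mu_bound: "\<theta> \<in> \<Theta> \<Longrightarrow> \<bar>mu \<theta> u\<bar> \<le> B"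
  unfolding mu_E[of _ _ 0] by (rule abs_int_le_const[OF M_prob]) (auto simp: Yb)

lemma mu_lip: "\<theta> \<in> \<Theta> \<Longrightarrow> \<theta>' \<in> \<Theta> \<Longrightarrow> \<bar>mu \<theta> u - mu \<theta>' u\<bar> \<le> (2 + 2*\<bar>u\<bar>) * dist \<theta> \<theta>' / c^2"
proof -
  assume th: "\<theta> \<in> \<Theta>" and th': "\<theta>' \<in> \<Theta>"
  have "mu \<theta> u - mu \<theta>' u = (\<integral>\<omega>. Yf \<theta> u (X 0 \<omega>) - Yf \<theta>' u (X 0 \<omega>) \<partial>M)"
    unfolding mu_E[of _ _ 0] by (rule Bochner_Integration.integral_diff[symmetric, OF intY[OF th] intY[OF th']])
  also have "\<bar>\<dots>\<bar> \<le> (2 + 2*\<bar>u\<bar>) * dist \<theta> \<theta>' / c^2"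
    by (rule abs_int_le_const[OF M_prob]) (auto intro: Ylip[OF th th'])
  finally show ?thesis .
qed

lemma Phi_meas[measurable]: "\<Phi> \<in> borel_measurable borel"
  unfolding \<Phi>_def by (rule real_distribution.char_measurable[OF real_distr_Df])

lemma cnj_meas[measurable]: "cnj \<in> borel_measurable borel"
  by (intro borel_measurable_continuous_onI continuous_on_cnj continuous_on_id)

lemma cmod_meas[measurable]: "cmod \<in> borel_measurable borel"
  by (intro borel_measurable_continuous_onI continuous_on_norm continuous_on_id)

lemma mu_meas[measurable]: "mu \<theta> \<in> borel_measurable borel"
  unfolding mu_def[abs_def] by measurable

lemma mu_isCont: "\<theta> \<in> \<Theta> \<Longrightarrow> isCont (mu \<theta>) u"
proof -
  assume th: "\<theta> \<in> \<Theta>"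
  have nz: "cmod (Mchar \<theta> u) \<noteq> 0" using M_ge[OF th, of u] c_pos by auto
  have c1: "isCont (\<lambda>x. Re (\<Phi> x)) u" by (rule continuous_Re[OF Phi_cont])
  have c2: "isCont (\<lambda>x. Re (Mchar \<theta>'' x)) u" "isCont (\<lambda>x. Im (Mchar \<theta>'' x)) u" for \<theta>''
    by (rule continuous_Re[OF Mchar_isCont], rule continuous_Im[OF Mchar_isCont])
  have c3: "isCont (\<lambda>x. Im (Mchar (p0, \<alpha>0, \<beta>0) x * cnj (Mchar \<theta> x))) u"
    by (intro continuous_Im continuous_mult continuous_cnj Mchar_isCont)
  have c4: "isCont (\<lambda>x. (cmod (Mchar \<theta> x))\<^sup>2) u"
    by (intro continuous_power continuous_norm Mchar_isCont)
  show ?thesis unfolding mu_def[abs_def]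
    by (intro isCont_divide isCont_mult c1 c3 c4) (use nz in auto)
qed

lemma W_finite: "finite_measure W" using W_prob by (simp add: prob_space_def)

lemma mm_int: "integrable W mm"
  using W_moment by (simp add: mm_def[abs_def])

lemma mm_ge: "1 \<le> mm u" "\<bar>u\<bar> \<le> mm u" "(1 + \<bar>u\<bar>)^2 \<le> 2 * mm u" "1 + \<bar>u\<bar> \<le> mm u"
proof -
  show "1 + \<bar>u\<bar> \<le> mm u" by (simp add: mm_def)
  show "1 \<le> mm u" by (simp add: mm_def)
  show "\<bar>u\<bar> \<le> mm u" by (simp add: mm_def)
  have "(1 + \<bar>u\<bar>)^2 = 1 + 2*\<bar>u\<bar> + u^2" by (simp add: power2_eq_square algebra_simps)
  also have "\<dots> \<le> 2 * mm u" by (simp add: mm_def)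
  finally show "(1 + \<bar>u\<bar>)^2 \<le> 2 * mm u" .
qed

lemma mom_ge: "1 \<le> mom"
proof -
  have "(\<integral>u. 1 \<partial>W) \<le> mom" unfolding mom_def
    by (rule integral_mono[OF finite_measure.integrable_const[OF W_finite] mm_int]) (simp add: mm_ge)
  then show ?thesis using W_prob by (simp add: prob_space.prob_space)
qed

definition "S \<theta> = (\<integral>u. (mu \<theta> u)\<^sup>2 \<partial>W)"

lemma int_mu2: "\<theta> \<in> \<Theta> \<Longrightarrow> integrable W (\<lambda>u. (mu \<theta> u)\<^sup>2)"
proof (rule finite_measure.integrable_const_bound[OF W_finite, where B="B^2"])
  assume th: "\<theta> \<in> \<Theta>"
  show "AE x in W. norm ((mu \<theta> x)\<^sup>2) \<le> B\<^sup>2"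
  proof (intro AE_I2)
    fix x
    have "\<bar>mu \<theta> x\<bar>^2 \<le> B^2" by (rule power_mono[OF mu_bound[OF th, of x] abs_ge_zero])
    then show "norm ((mu \<theta> x)\<^sup>2) \<le> B\<^sup>2" by simp
  qed
qed simp

lemma S_nonneg: "0 \<le> S \<theta>"
  unfolding S_def by simp

lemma S_theta0: "S (p0, \<alpha>0, \<beta>0) = 0"
proof -
  have "mu (p0, \<alpha>0, \<beta>0) u = 0" for u
  proof -
    have "Im (Mchar (p0, \<alpha>0, \<beta>0) u * cnj (Mchar (p0, \<alpha>0, \<beta>0) u)) = 0"
      by (simp add: complex_mult_cnj)
    then show ?thesis by (simp add: mu_def)
  qed
  then show ?thesis by (simp add: S_def)
qed

lemma S_lip: "\<theta> \<in> \<Theta> \<Longrightarrow> \<theta>' \<in> \<Theta> \<Longrightarrow> \<bar>S \<theta> - S \<theta>'\<bar> \<le> 4 * B * mom / c^2 * dist \<theta> \<theta>'"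
proof -
  assume th: "\<theta> \<in> \<Theta>" and th': "\<theta>' \<in> \<Theta>"
  have pt: "\<bar>(mu \<theta> u)\<^sup>2 - (mu \<theta>' u)\<^sup>2\<bar> \<le> 4 * B / c^2 * dist \<theta> \<theta>' * mm u" for u
  proof -
    have "\<bar>(mu \<theta> u)\<^sup>2 - (mu \<theta>' u)\<^sup>2\<bar> = \<bar>mu \<theta> u + mu \<theta>' u\<bar> * \<bar>mu \<theta> u - mu \<theta>' u\<bar>"
      by (simp add: power2_eq_square abs_mult[symmetric] algebra_simps)
    also have "\<dots> \<le> (2*B) * ((2 + 2*\<bar>u\<bar>) * dist \<theta> \<theta>' / c^2)"
      using mu_bound[OF th, of u] mu_bound[OF th', of u]
      by (intro mult_mono mu_lip[OF th th']) auto
    also have "\<dots> \<le> (2*B) * ((2 * mm u) * dist \<theta> \<theta>' / c^2)"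
      using mm_ge[of u] B_pos c_pos
      by (intro mult_left_mono divide_right_mono mult_right_mono) auto
    also have "\<dots> = 4 * B / c^2 * dist \<theta> \<theta>' * mm u" by (simp add: field_simps)
    finally show ?thesis .
  qed
  have "\<bar>S \<theta> - S \<theta>'\<bar> = \<bar>\<integral>u. (mu \<theta> u)\<^sup>2 - (mu \<theta>' u)\<^sup>2 \<partial>W\<bar>"
    unfolding S_def by (subst Bochner_Integration.integral_diff[OF int_mu2[OF th] int_mu2[OF th']]) simp
  also have "\<dots> \<le> (\<integral>u. \<bar>(mu \<theta> u)\<^sup>2 - (mu \<theta>' u)\<^sup>2\<bar> \<partial>W)" by (rule integral_abs_bound)
  also have "\<dots> \<le> (\<integral>u. 4 * B / c^2 * dist \<theta> \<theta>' * mm u \<partial>W)"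
    by (rule integral_mono[OF _ _ pt]) (auto intro!: mm_int Bochner_Integration.integrable_diff int_mu2 th th')
  also have "\<dots> = 4 * B * mom / c^2 * dist \<theta> \<theta>'" by (simp add: mom_def)
  finally show ?thesis .
qed

lemma space_W: "space W = UNIV"
  using sets_eq_imp_space_eq[OF W_sets] by simp

lemma mu_zero_if_S0:
  assumes th: "\<theta> \<in> \<Theta>" and S0: "S \<theta> = 0"
  shows "mu \<theta> u0 = 0"
proof (rule ccontr)
  assume nz: "mu \<theta> u0 \<noteq> 0"
  define v where "v = (mu \<theta> u0)\<^sup>2 / 2"
  have v: "0 < v" using nz by (simp add: v_def)
  define U where "U = {u. (\<lambda>_. v) u < (\<lambda>u. (mu \<theta> u)\<^sup>2) u}"
  have cont: "continuous_on UNIV (\<lambda>u. (mu \<theta> u)\<^sup>2)"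
    by (intro continuous_at_imp_continuous_on ballI continuous_power mu_isCont th)
  have oU: "open U" unfolding U_def by (rule open_Collect_less[OF continuous_on_const cont])
  have "u0 \<in> U" using v nz by (simp add: U_def v_def)
  then have "emeasure W U > 0" using W_support[OF oU] by auto
  moreover have UW: "U \<in> sets W" using oU W_sets by simp
  moreover have "emeasure W U = ennreal (measure W U)" by (rule finite_measure.emeasure_eq_measure[OF W_finite])
  ultimately have mpos: "measure W U > 0" by simp
  have "(\<integral>u. v * indicator U u \<partial>W) \<le> S \<theta>"
    unfolding S_def
  proof (rule integral_mono)
    have "emeasure W U < \<infinity>" using finite_measure.emeasure_finite[OF W_finite] by (simp add: less_top)
    then show "integrable W (\<lambda>u. v * indicator U u)"
      by (intro integrable_mult_right integrable_real_indicator UW)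
    show "integrable W (\<lambda>u. (mu \<theta> u)\<^sup>2)" by (rule int_mu2[OF th])
    show "v * indicator U u \<le> (mu \<theta> u)\<^sup>2" for u
      using v by (cases "u \<in> U") (auto simp: U_def)
  qed
  moreover have "(\<integral>u. v * indicator U u \<partial>W) = v * measure W U"
    by (simp add: space_W)
  moreover have "v * measure W U > 0" using v mpos by (rule mult_pos_pos)
  ultimately show False using S0 by linarith
qed

lemma S_pos:
  assumes th: "\<theta> \<in> \<Theta>" and ne: "\<theta> \<noteq> (p0, \<alpha>0, \<beta>0)"
  shows "S \<theta> > 0"
proof (rule ccontr)
  assume "\<not> S \<theta> > 0"
  then have S0: "S \<theta> = 0" using S_nonneg[of \<theta>] by simp
  have ReC: "isCont (\<lambda>x. Re (\<Phi> x)) 0" by (rule continuous_Re[OF Phi_cont])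
  obtain \<delta> where \<delta>: "\<delta> > 0" "\<And>x. dist x 0 < \<delta> \<Longrightarrow> dist (Re (\<Phi> x)) (Re (\<Phi> 0)) < 1/2"
    using ReC[unfolded continuous_at_eps_delta, rule_format, of "1/2"] by auto
  obtain p a b where \<theta>: "\<theta> = (p,a,b)" by (cases \<theta>)
  have pab: "0 < p" "p < 1/2" "a \<noteq> b" using th Theta_sub by (auto simp: \<theta>)
  have pab0: "0 < p0" "p0 < 1/2" "\<alpha>0 \<noteq> \<beta>0" using theta0 Theta_sub by auto
  have "Im (Mchar (p0, \<alpha>0, \<beta>0) u * cnj (Mchar (p,a,b) u)) = 0" if u: "\<bar>u\<bar> < \<delta>" for u
  proof -
    have "dist (Re (\<Phi> u)) 1 < 1/2" using \<delta>(2)[of u] u Phi_0 by (simp add: dist_real_def)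
    then have R: "Re (\<Phi> u) \<noteq> 0" by (auto simp: dist_real_def)
    have nz: "cmod (Mchar \<theta> u) \<noteq> 0" using M_ge[OF th, of u] c_pos by auto
    have "mu \<theta> u = 0" by (rule mu_zero_if_S0[OF th S0])
    then show ?thesis using R nz by (simp add: mu_def \<theta>)
  qed
  from ident_near0[OF pab(1,2) pab0(1,2) pab(3) pab0(3) \<delta>(1) this] ne \<theta> show False by simp
qed

end

context mainsetup
begin

lemma indep_pair:
  assumes jk: "j \<noteq> k" and [measurable]: "\<phi> \<in> borel_measurable borel" "\<psi> \<in> borel_measurable borel"
  shows "prob_space.indep_var M borel (\<lambda>\<omega>. \<phi> (X j \<omega>)) borel (\<lambda>\<omega>. \<psi> (X k \<omega>))"
proof -
  have "prob_space.indep_var M (PiM {j} (\<lambda>_. borel)) (\<lambda>\<omega>. restrict (\<lambda>i. X i \<omega>) {j})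
                               (PiM {k} (\<lambda>_. borel)) (\<lambda>\<omega>. restrict (\<lambda>i. X i \<omega>) {k})"
    by (rule prob_space.indep_var_restrict[OF M_prob X_indep]) (use jk in auto)
  then have "prob_space.indep_var M borel ((\<lambda>x. \<phi> (x j)) \<circ> (\<lambda>\<omega>. restrict (\<lambda>i. X i \<omega>) {j}))
                               borel ((\<lambda>x. \<psi> (x k)) \<circ> (\<lambda>\<omega>. restrict (\<lambda>i. X i \<omega>) {k}))"
  proof (rule prob_space.indep_var_compose[OF M_prob])
    show "(\<lambda>x. \<phi> (x j)) \<in> Pi\<^sub>M {j} (\<lambda>_. borel) \<rightarrow>\<^sub>M borel"
      by (rule measurable_compose[OF measurable_component_singleton]) auto
    show "(\<lambda>x. \<psi> (x k)) \<in> Pi\<^sub>M {k} (\<lambda>_. borel) \<rightarrow>\<^sub>M borel"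
      by (rule measurable_compose[OF measurable_component_singleton]) auto
  qed
  then show ?thesis by (simp add: comp_def)
qed

definition "Ybar n \<theta> u \<omega> = (\<Sum>j\<in>{1..n}. Yf \<theta> u (X j \<omega>)) / real n"
definition "V n \<theta> u \<omega> = (Ybar n \<theta> u \<omega> - mu \<theta> u)\<^sup>2"
definition "Q n \<theta> \<omega> = (\<integral>u. V n \<theta> u \<omega> \<partial>W)"

lemma Ybar_bound: "\<theta> \<in> \<Theta> \<Longrightarrow> \<bar>Ybar n \<theta> u \<omega>\<bar> \<le> B"
proof -
  assume th: "\<theta> \<in> \<Theta>"
  show ?thesis
  proof (cases "n = 0")
    case True then show ?thesis using B_pos by (simp add: Ybar_def)
  next
    case False
    have "\<bar>\<Sum>j\<in>{1..n}. Yf \<theta> u (X j \<omega>)\<bar> \<le> (\<Sum>j\<in>{1..n}. \<bar>Yf \<theta> u (X j \<omega>)\<bar>)" by (rule sum_abs)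
    also have "\<dots> \<le> (\<Sum>j\<in>{1..n}. B)" by (intro sum_mono Yb th)
    also have "\<dots> = real n * B" by simp
    finally have sb: "\<bar>\<Sum>j\<in>{1..n}. Yf \<theta> u (X j \<omega>)\<bar> \<le> real n * B" .
    have "\<bar>Ybar n \<theta> u \<omega>\<bar> = \<bar>\<Sum>j\<in>{1..n}. Yf \<theta> u (X j \<omega>)\<bar> / real n"
      by (simp add: Ybar_def)
    also have "\<dots> \<le> real n * B / real n" by (rule divide_right_mono[OF sb]) simp
    also have "\<dots> = B" using False by simp
    finally show ?thesis .
  qed
qed

lemma V_bound: "\<theta> \<in> \<Theta> \<Longrightarrow> 0 \<le> V n \<theta> u \<omega> \<and> V n \<theta> u \<omega> \<le> 4 * B\<^sup>2"
proof -
  assume th: "\<theta> \<in> \<Theta>"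
  have "\<bar>Ybar n \<theta> u \<omega> - mu \<theta> u\<bar> \<le> 2 * B"
    using Ybar_bound[OF th, of n u \<omega>] mu_bound[OF th, of u] by linarith
  then have "\<bar>Ybar n \<theta> u \<omega> - mu \<theta> u\<bar>^2 \<le> (2*B)^2" by (rule power_mono) simp
  then show ?thesis by (simp add: V_def power_mult_distrib)
qed

lemma V_meas[measurable]: "(\<lambda>(u, \<omega>). V n \<theta> u \<omega>) \<in> borel_measurable (W \<Otimes>\<^sub>M M)"
  unfolding V_def Ybar_def by measurable

lemma V_meas2[measurable]: "(\<lambda>(\<omega>, u). V n \<theta> u \<omega>) \<in> borel_measurable (M \<Otimes>\<^sub>M W)"
  unfolding V_def Ybar_def by measurable

lemma V_meas_u[measurable]: "(\<lambda>u. V n \<theta> u \<omega>) \<in> borel_measurable W"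
  unfolding V_def Ybar_def by measurable

lemma EV: assumes th: "\<theta> \<in> \<Theta>" and n: "1 \<le> n"
  shows "(\<integral>\<omega>. V n \<theta> u \<omega> \<partial>M) \<le> 4 * B\<^sup>2 / real n"
proof -
  define Z where "Z j \<omega> = Yf \<theta> u (X j \<omega>) - mu \<theta> u" for j \<omega>
  have Zb: "\<bar>Z j \<omega>\<bar> \<le> 2 * B" for j \<omega>
    using Yb[OF th, of u "X j \<omega>"] mu_bound[OF th, of u] by (simp add: Z_def)
  have Zm[measurable]: "Z j \<in> borel_measurable M" for j unfolding Z_def by measurable
  have iZ: "integrable M (Z j)" for j
    by (rule finite_measure.integrable_const_bound[OF M_finite, where B="2*B"]) (auto simp: Zb)
  have iZZ: "integrable M (\<lambda>\<omega>. Z j \<omega> * Z k \<omega>)" for j k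
  proof (rule finite_measure.integrable_const_bound[OF M_finite, where B="2*B*(2*B)"])
    show "AE x in M. norm (Z j x * Z k x) \<le> 2 * B * (2 * B)"
    proof (intro AE_I2)
      fix x
      have "\<bar>Z j x\<bar> * \<bar>Z k x\<bar> \<le> (2*B) * (2*B)" by (rule mult_mono[OF Zb Zb]) (use B_pos in auto)
      then show "norm (Z j x * Z k x) \<le> 2 * B * (2 * B)" by (simp add: abs_mult)
    qed
  qed simp
  have EZ: "(\<integral>\<omega>. Z j \<omega> \<partial>M) = 0" for j
  proof -
    have "(\<integral>\<omega>. Z j \<omega> \<partial>M) = (\<integral>\<omega>. Yf \<theta> u (X j \<omega>) \<partial>M) - (\<integral>\<omega>. mu \<theta> u \<partial>M)"
      unfolding Z_def
      by (rule Bochner_Integration.integral_diff[OF intY[OF th] finite_measure.integrable_const[OF M_finite]])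
    also have "\<dots> = 0" using M_prob by (simp add: E_Yf prob_space.prob_space)
    finally show ?thesis .
  qed
  have off: "(\<integral>\<omega>. Z j \<omega> * Z k \<omega> \<partial>M) = 0" if "j \<noteq> k" for j k
  proof -
    have ind: "prob_space.indep_var M borel (Z j) borel (Z k)"
      using indep_pair[OF that, of "\<lambda>x. Yf \<theta> u x - mu \<theta> u" "\<lambda>x. Yf \<theta> u x - mu \<theta> u"]
      by (simp add: Z_def[abs_def])
    show ?thesis
      using prob_space.indep_var_lebesgue_integral[OF M_prob ind iZ iZ] EZ by simp
  qed
  have YZ: "Ybar n \<theta> u \<omega> - mu \<theta> u = (\<Sum>j\<in>{1..n}. Z j \<omega>) / real n" for \<omega>
    using n by (simp add: Ybar_def Z_def sum_subtractf field_simps)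
  have "(\<integral>\<omega>. V n \<theta> u \<omega> \<partial>M) = (\<integral>\<omega>. (\<Sum>j\<in>{1..n}. \<Sum>k\<in>{1..n}. Z j \<omega> * Z k \<omega>) / (real n)^2 \<partial>M)"
    by (simp add: V_def YZ power_divide power2_eq_square sum_product)
  also have "\<dots> = (\<Sum>j\<in>{1..n}. \<Sum>k\<in>{1..n}. (\<integral>\<omega>. Z j \<omega> * Z k \<omega> \<partial>M)) / (real n)^2"
    by (simp add: Bochner_Integration.integral_sum iZZ Bochner_Integration.integrable_sum)
  also have "\<dots> = (\<Sum>j\<in>{1..n}. (\<integral>\<omega>. Z j \<omega> * Z j \<omega> \<partial>M)) / (real n)^2"
  proof -
    have "(\<Sum>k\<in>{1..n}. (\<integral>\<omega>. Z j \<omega> * Z k \<omega> \<partial>M)) = (\<integral>\<omega>. Z j \<omega> * Z j \<omega> \<partial>M)" if "j \<in> {1..n}" for j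
    proof -
      have "(\<Sum>k\<in>{1..n}. (\<integral>\<omega>. Z j \<omega> * Z k \<omega> \<partial>M)) = (\<Sum>k\<in>{1..n}. if k = j then (\<integral>\<omega>. Z j \<omega> * Z j \<omega> \<partial>M) else 0)"
        by (intro sum.cong refl) (auto simp: off)
      also have "\<dots> = (\<integral>\<omega>. Z j \<omega> * Z j \<omega> \<partial>M)" using that by simp
      finally show ?thesis .
    qed
    then show ?thesis by simp
  qed
  also have "\<dots> \<le> (\<Sum>j\<in>{1..n}. 4 * B\<^sup>2) / (real n)^2"
  proof (intro divide_right_mono sum_mono)
    fix j
    have "\<bar>\<integral>\<omega>. Z j \<omega> * Z j \<omega> \<partial>M\<bar> \<le> 4 * B\<^sup>2"
    proof (rule abs_int_le_const[OF M_prob])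
      fix \<omega>
      have "\<bar>Z j \<omega> * Z j \<omega>\<bar> \<le> (2*B) * (2*B)" unfolding abs_mult by (intro mult_mono Zb) (use B_pos in auto)
      then show "\<bar>Z j \<omega> * Z j \<omega>\<bar> \<le> 4 * B\<^sup>2" by (simp add: power2_eq_square)
    qed simp
    then show "(\<integral>\<omega>. Z j \<omega> * Z j \<omega> \<partial>M) \<le> 4 * B\<^sup>2" by simp
  qed simp
  also have "\<dots> = 4 * B\<^sup>2 / real n" using n by (simp add: power2_eq_square)
  finally show ?thesis .
qed

lemma pair_sf: "pair_sigma_finite W M"
  unfolding pair_sigma_finite_def
  using W_prob M_prob by (auto intro: prob_space_imp_sigma_finite)

lemma Q_meas[measurable]: "Q n \<theta> \<in> borel_measurable M"
  unfolding Q_def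
  by (rule sigma_finite_measure.borel_measurable_lebesgue_integral[OF prob_space_imp_sigma_finite[OF W_prob]]) simp

lemma Q_bound: "\<theta> \<in> \<Theta> \<Longrightarrow> 0 \<le> Q n \<theta> \<omega> \<and> Q n \<theta> \<omega> \<le> 4 * B\<^sup>2"
proof -
  assume th: "\<theta> \<in> \<Theta>"
  have "\<bar>Q n \<theta> \<omega>\<bar> \<le> 4 * B\<^sup>2" unfolding Q_def
    by (rule abs_int_le_const[OF W_prob]) (use V_bound[OF th] in auto)
  moreover have "0 \<le> Q n \<theta> \<omega>" unfolding Q_def
    by (rule integral_nonneg_AE) (use V_bound[OF th] in auto)
  ultimately show ?thesis by simp
qed

lemma Q_int: "\<theta> \<in> \<Theta> \<Longrightarrow> integrable M (Q n \<theta>)"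
  by (rule finite_measure.integrable_const_bound[OF M_finite, where B="4*B\<^sup>2"]) (use Q_bound in auto)

lemma EQ: assumes th: "\<theta> \<in> \<Theta>" and n: "1 \<le> n"
  shows "(\<integral>\<omega>. Q n \<theta> \<omega> \<partial>M) \<le> 4 * B\<^sup>2 / real n"
proof -
  have int: "integrable (W \<Otimes>\<^sub>M M) (\<lambda>(u, \<omega>). V n \<theta> u \<omega>)"
  proof (rule finite_measure.integrable_const_bound[where B="4*B\<^sup>2"])
    show "finite_measure (W \<Otimes>\<^sub>M M)" by (rule finite_measure_pair_measure[OF M_finite W_finite])
    show "AE x in W \<Otimes>\<^sub>M M. norm (case x of (u, \<omega>) \<Rightarrow> V n \<theta> u \<omega>) \<le> 4 * B\<^sup>2"
      using V_bound[OF th] by (auto split: prod.split)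
  qed simp
  have "(\<integral>\<omega>. Q n \<theta> \<omega> \<partial>M) = (\<integral>u. (\<integral>\<omega>. V n \<theta> u \<omega> \<partial>M) \<partial>W)"
    unfolding Q_def by (rule pair_sigma_finite.Fubini_integral[OF pair_sf int])
  also have "\<dots> \<le> 4 * B\<^sup>2 / real n"
  proof -
    have "\<bar>\<integral>u. (\<integral>\<omega>. V n \<theta> u \<omega> \<partial>M) \<partial>W\<bar> \<le> 4 * B\<^sup>2 / real n"
    proof (rule abs_int_le_const[OF W_prob])
      show "(\<lambda>u. \<integral>\<omega>. V n \<theta> u \<omega> \<partial>M) \<in> borel_measurable W"
        by (rule sigma_finite_measure.borel_measurable_lebesgue_integral[OF prob_space_imp_sigma_finite[OF M_prob]]) simp
      fix u
      have "0 \<le> (\<integral>\<omega>. V n \<theta> u \<omega> \<partial>M)" by (rule integral_nonneg_AE) (use V_bound[OF th] in auto)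
      then show "\<bar>\<integral>\<omega>. V n \<theta> u \<omega> \<partial>M\<bar> \<le> 4 * B\<^sup>2 / real n" using EV[OF th n, of u] by simp
    qed
    then show ?thesis by simp
  qed
  finally show ?thesis .
qed

end

lemma abs_eq_aux: fixes N yb s2 :: real assumes nz: "N \<noteq> 0" "N - 1 \<noteq> 0"
  shows "(N\<^sup>2 * yb\<^sup>2 - s2) / (N * (N - 1)) - yb\<^sup>2 = yb\<^sup>2 / (N - 1) - s2 / (N * (N - 1))"
proof -
  have "(N\<^sup>2 * yb\<^sup>2 - s2) / (N * (N - 1)) = N\<^sup>2 * yb\<^sup>2 / (N * (N - 1)) - s2 / (N * (N - 1))"
    by (rule diff_divide_distrib)
  moreover have "N\<^sup>2 * yb\<^sup>2 / (N * (N - 1)) = N * yb\<^sup>2 / (N - 1)"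
    using nz by (simp add: power2_eq_square)
  moreover have "N * yb\<^sup>2 / (N - 1) = yb\<^sup>2 + yb\<^sup>2 / (N - 1)"
  proof -
    have "N * yb\<^sup>2 = (N - 1) * yb\<^sup>2 + yb\<^sup>2" by (simp add: algebra_simps)
    then show ?thesis using nz by (simp add: add_divide_distrib)
  qed
  ultimately show ?thesis by simp
qed

lemma abstract_bound:
  fixes N yb s2 mu B eta W0 hm ind :: real
  assumes N: "N \<ge> 2" and yb: "\<bar>yb\<bar> \<le> B" and s2: "0 \<le> s2" "s2 \<le> N * B\<^sup>2" and mu: "\<bar>mu\<bar> \<le> B"
    and eta: "eta > 0" and W0: "(yb - mu)\<^sup>2 \<le> W0" and hm: "0 \<le> hm"
    and ind: "ind = 0 \<or> ind = 1" and ind0: "ind = 0 \<Longrightarrow> B\<^sup>2 \<le> hm"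
  shows "\<bar>ind * ((N\<^sup>2 * yb\<^sup>2 - s2) / (N * (N - 1))) - mu\<^sup>2\<bar> \<le> 2 * B\<^sup>2 / (N - 1) + eta + (B\<^sup>2 / eta) * W0 + hm"
proof -
  have B: "0 \<le> B" using mu by linarith
  have N1: "N - 1 > 0" using N by simp
  have yb2: "yb\<^sup>2 \<le> B\<^sup>2" using power_mono[OF yb abs_ge_zero, of 2] by simp
  have mu2: "mu\<^sup>2 \<le> B\<^sup>2" using power_mono[OF mu abs_ge_zero, of 2] by simp
  have W0nn: "0 \<le> W0" using W0 by (meson order_trans zero_le_power2)
  have t3: "0 \<le> (B\<^sup>2 / eta) * W0" using eta W0nn by simp
  have t1: "0 \<le> 2 * B\<^sup>2 / (N - 1)" using N1 by simp
  have a: "\<bar>(N\<^sup>2 * yb\<^sup>2 - s2) / (N * (N - 1)) - yb\<^sup>2\<bar> \<le> 2 * B\<^sup>2 / (N - 1)"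
  proof -
    have nz: "N \<noteq> 0" "N - 1 \<noteq> 0" using N by auto
    have eq: "(N\<^sup>2 * yb\<^sup>2 - s2) / (N * (N - 1)) - yb\<^sup>2 = yb\<^sup>2 / (N - 1) - s2 / (N * (N - 1))"
      by (rule abs_eq_aux[OF nz])
    have "yb\<^sup>2 / (N - 1) \<le> B\<^sup>2 / (N - 1)" using yb2 N1 by (simp add: divide_right_mono)
    moreover have "s2 / (N * (N - 1)) \<le> B\<^sup>2 / (N - 1)"
    proof -
      have "s2 / (N * (N - 1)) \<le> (N * B\<^sup>2) / (N * (N - 1))" using s2 N N1 by (intro divide_right_mono) auto
      also have "\<dots> = B\<^sup>2 / (N - 1)" using N by simp
      finally show ?thesis .
    qed
    moreover have "0 \<le> yb\<^sup>2 / (N - 1)" "0 \<le> s2 / (N * (N - 1))" using N1 N s2 by auto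
    ultimately show ?thesis unfolding eq by linarith
  qed
  have b: "\<bar>yb\<^sup>2 - mu\<^sup>2\<bar> \<le> eta + (B\<^sup>2 / eta) * W0"
  proof -
    define x where "x = \<bar>yb - mu\<bar>"
    have "\<bar>yb\<^sup>2 - mu\<^sup>2\<bar> = \<bar>yb + mu\<bar> * x" by (simp add: x_def power2_eq_square abs_mult[symmetric] algebra_simps)
    also have "\<dots> \<le> (2*B) * x" using yb mu by (intro mult_right_mono) (auto simp: x_def)
    also have "\<dots> \<le> eta + (B\<^sup>2 / eta) * x\<^sup>2"
    proof -
      have "0 \<le> (B * x - eta)\<^sup>2 / eta" using eta by simp
      also have "(B * x - eta)\<^sup>2 / eta = (B\<^sup>2 / eta) * x\<^sup>2 - 2 * B * x + eta"
        using eta by (simp add: power2_eq_square field_simps)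
      finally show ?thesis by simp
    qed
    also have "\<dots> \<le> eta + (B\<^sup>2 / eta) * W0"
      using W0 eta by (intro add_left_mono mult_left_mono) (auto simp: x_def)
    finally show ?thesis .
  qed
  show ?thesis
  proof (cases "ind = 0")
    case True
    then show ?thesis using ind0 mu2 t1 t3 eta by simp
  next
    case False
    then have "ind = 1" using ind by simp
    then show ?thesis using a b hm by simp
  qed
qed

lemma L_sq: "c \<noteq> 0 \<Longrightarrow> (2 * ((2 + 2*w) * r / c^2))\<^sup>2 = 16 * (1 + w)\<^sup>2 * r\<^sup>2 / c^4"
  for c w r :: real
proof -
  assume c: "c \<noteq> 0"
  have "(2 * ((2 + 2*w) * r / c^2))\<^sup>2 = (4 * (1 + w) * r)\<^sup>2 / (c^2)^2"
    by (simp add: power_divide algebra_simps)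
  also have "\<dots> = 16 * (1 + w)\<^sup>2 * r\<^sup>2 / c^4"
    by (simp add: power_mult_distrib power_mult[symmetric]) (simp add: power2_eq_square algebra_simps)
  finally show ?thesis .
qed

lemma sq_split: "(a::real)\<^sup>2 \<le> 2 * b\<^sup>2 + 2 * (a - b)\<^sup>2"
proof -
  have "0 \<le> (a - 2*b)\<^sup>2" by simp
  then show ?thesis by (simp add: power2_eq_square algebra_simps)
qed

context mainsetup
begin

lemma Ybar_lip: "\<theta> \<in> \<Theta> \<Longrightarrow> \<theta>' \<in> \<Theta> \<Longrightarrow>
  \<bar>Ybar n \<theta> u \<omega> - Ybar n \<theta>' u \<omega>\<bar> \<le> (2 + 2*\<bar>u\<bar>) * dist \<theta> \<theta>' / c^2"
proof -
  assume th: "\<theta> \<in> \<Theta>" and th': "\<theta>' \<in> \<Theta>"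
  define L where "L = (2 + 2*\<bar>u\<bar>) * dist \<theta> \<theta>' / c^2"
  have L: "0 \<le> L" using c_pos by (simp add: L_def)
  show ?thesis
  proof (cases "n = 0")
    case True then show ?thesis using L by (simp add: Ybar_def L_def)
  next
    case False
    have "\<bar>(\<Sum>j\<in>{1..n}. Yf \<theta> u (X j \<omega>)) - (\<Sum>j\<in>{1..n}. Yf \<theta>' u (X j \<omega>))\<bar>
        = \<bar>\<Sum>j\<in>{1..n}. Yf \<theta> u (X j \<omega>) - Yf \<theta>' u (X j \<omega>)\<bar>" by (simp add: sum_subtractf)
    also have "\<dots> \<le> (\<Sum>j\<in>{1..n}. \<bar>Yf \<theta> u (X j \<omega>) - Yf \<theta>' u (X j \<omega>)\<bar>)" by (rule sum_abs)
    also have "\<dots> \<le> (\<Sum>j\<in>{1..n}. L)" unfolding L_def by (intro sum_mono Ylip th th')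
    also have "\<dots> = real n * L" by simp
    finally have "\<bar>(\<Sum>j\<in>{1..n}. Yf \<theta> u (X j \<omega>)) - (\<Sum>j\<in>{1..n}. Yf \<theta>' u (X j \<omega>))\<bar> \<le> real n * L" .
    then have sb: "\<bar>(\<Sum>j\<in>{1..n}. Yf \<theta> u (X j \<omega>)) - (\<Sum>j\<in>{1..n}. Yf \<theta>' u (X j \<omega>))\<bar> \<le> real n * L" .
    have "\<bar>Ybar n \<theta> u \<omega> - Ybar n \<theta>' u \<omega>\<bar> = \<bar>(\<Sum>j\<in>{1..n}. Yf \<theta> u (X j \<omega>)) - (\<Sum>j\<in>{1..n}. Yf \<theta>' u (X j \<omega>))\<bar> / real n"
      by (simp add: Ybar_def diff_divide_distrib[symmetric])
    also have "\<dots> \<le> real n * L / real n" by (rule divide_right_mono[OF sb]) simp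
    also have "\<dots> = L" using False by simp
    finally show ?thesis by (simp add: L_def)
  qed
qed

lemma V_transfer:
  assumes th: "\<theta> \<in> \<Theta>" and th': "\<theta>' \<in> \<Theta>" and r: "dist \<theta> \<theta>' \<le> r"
  shows "(Ybar n \<theta> u \<omega> - mu \<theta> u)\<^sup>2 \<le> 2 * V n \<theta>' u \<omega> + 64 * r\<^sup>2 * mm u / c^4"
proof -
  define L where "L = (2 + 2*\<bar>u\<bar>) * r / c^2"
  have dL: "(2 + 2*\<bar>u\<bar>) * dist \<theta> \<theta>' / c^2 \<le> L"
    unfolding L_def using r c_pos by (intro divide_right_mono mult_left_mono) auto
  have D: "\<bar>(Ybar n \<theta> u \<omega> - mu \<theta> u) - (Ybar n \<theta>' u \<omega> - mu \<theta>' u)\<bar> \<le> 2 * L"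
    using Ybar_lip[OF th th', of n u \<omega>] mu_lip[OF th th', of u] dL by linarith
  have D2: "((Ybar n \<theta> u \<omega> - mu \<theta> u) - (Ybar n \<theta>' u \<omega> - mu \<theta>' u))\<^sup>2 \<le> (2 * L)\<^sup>2"
    using power_mono[OF D abs_ge_zero, of 2] by simp
  have "(2 * L)\<^sup>2 = 16 * (1 + \<bar>u\<bar>)\<^sup>2 * r\<^sup>2 / c^4"
    unfolding L_def using c_pos by (intro L_sq) simp
  also have "\<dots> \<le> 16 * (2 * mm u) * r\<^sup>2 / c^4"
    using mm_ge(3)[of u] c_pos by (intro divide_right_mono mult_right_mono mult_left_mono) auto
  finally have "(2 * L)\<^sup>2 \<le> 32 * r\<^sup>2 * mm u / c^4" by (simp add: mult_ac)
  with D2 sq_split[of "Ybar n \<theta> u \<omega> - mu \<theta> u" "Ybar n \<theta>' u \<omega> - mu \<theta>' u"]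
  show ?thesis by (simp add: V_def)
qed

end

context mainsetup
begin

lemma V_int: "\<theta> \<in> \<Theta> \<Longrightarrow> integrable W (\<lambda>u. V n \<theta> u \<omega>)"
  by (rule finite_measure.integrable_const_bound[OF W_finite, where B="4*B\<^sup>2"]) (use V_bound in auto)

lemma Pf_meas[measurable]: "Pf X n \<theta> \<omega> \<in> borel_measurable W"
  unfolding Pf_def[abs_def] by measurable

lemma main_bound:
  assumes th: "\<theta> \<in> \<Theta>" and th': "\<theta>' \<in> \<Theta>" and r: "dist \<theta> \<theta>' \<le> r"
    and n: "2 \<le> n" and eta: "eta > 0" and hn: "hn > 0"
  shows "\<bar>Sn W X hn n \<theta> \<omega> - S \<theta>\<bar> \<le> (2 * B\<^sup>2 / (real n - 1) + eta)
          + (B\<^sup>2 / eta) * (2 * Q n \<theta>' \<omega> + 64 * r\<^sup>2 / c^4 * mom) + B\<^sup>2 * hn * mom"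
proof -
  define A where "A = {u::real. \<bar>u\<bar> \<le> 1 / hn}"
  define D where "D = real n * (real n - 1)"
  define F where "F u = indicator A u * (Pf X n \<theta> \<omega> u / D)" for u
  define K1 where "K1 = 2 * B\<^sup>2 / (real n - 1) + eta"
  define K2 where "K2 = 64 * r\<^sup>2 / c^4"
  define K3 where "K3 = B\<^sup>2 * hn"
  define G where "G u = K1 + (B\<^sup>2 / eta) * (2 * V n \<theta>' u \<omega> + K2 * mm u) + K3 * mm u" for u
  have Am[measurable]: "A \<in> sets borel" unfolding A_def by measurable
  have Fm[measurable]: "F \<in> borel_measurable W" unfolding F_def[abs_def] by measurable
  have Sn_F: "Sn W X hn n \<theta> \<omega> = (\<integral>u. F u \<partial>W)"
  proof -
    have "Sn W X hn n \<theta> \<omega> = 1 / D * (\<integral>u. indicator A u * Pf X n \<theta> \<omega> u \<partial>W)"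
      unfolding Sn_eq A_def D_def ..
    also have "\<dots> = (\<integral>u. 1 / D * (indicator A u * Pf X n \<theta> \<omega> u) \<partial>W)"
      by (rule integral_mult_right_zero[symmetric])
    also have "\<dots> = (\<integral>u. F u \<partial>W)" by (simp add: F_def)
    finally show ?thesis .
  qed
  have pt: "\<bar>F u - (mu \<theta> u)\<^sup>2\<bar> \<le> G u" for u
  proof -
    define yb where "yb = Ybar n \<theta> u \<omega>"
    define s2 where "s2 = (\<Sum>j\<in>{1..n}. (Yf \<theta> u (X j \<omega>))\<^sup>2)"
    have npos: "real n > 0" using n by simp
    have Pf: "Pf X n \<theta> \<omega> u = (real n)\<^sup>2 * yb\<^sup>2 - s2"
    proof -
      have "(\<Sum>j\<in>{1..n}. Yf \<theta> u (X j \<omega>)) = real n * yb" using npos by (simp add: yb_def Ybar_def)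
      then show ?thesis by (simp add: Pf_def s2_def power_mult_distrib)
    qed
    have s2: "0 \<le> s2" "s2 \<le> real n * B\<^sup>2"
    proof -
      show "0 \<le> s2" unfolding s2_def by (intro sum_nonneg) simp
      have "s2 \<le> (\<Sum>j\<in>{1..n}. B\<^sup>2)" unfolding s2_def
      proof (intro sum_mono)
        fix j
        show "(Yf \<theta> u (X j \<omega>))\<^sup>2 \<le> B\<^sup>2"
          using power_mono[OF Yb[OF th, of u "X j \<omega>"] abs_ge_zero, of 2] by simp
      qed
      then show "s2 \<le> real n * B\<^sup>2" by simp
    qed
    have ind: "indicator A u = (0::real) \<or> indicator A u = (1::real)" by (simp add: indicator_def)
    have ind0: "B\<^sup>2 \<le> K3 * mm u" if "indicator A u = (0::real)"
    proof -
      have "u \<notin> A" using that by (auto simp: indicator_def split: if_splits)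
      then have "1 / hn < \<bar>u\<bar>" by (simp add: A_def)
      then have "1 < hn * \<bar>u\<bar>" using hn by (simp add: field_simps)
      also have "\<dots> \<le> hn * mm u" using hn mm_ge(2)[of u] by (intro mult_left_mono) auto
      finally have "1 \<le> hn * mm u" by simp
      then have "B\<^sup>2 * 1 \<le> B\<^sup>2 * (hn * mm u)" by (intro mult_left_mono) auto
      then show ?thesis by (simp add: K3_def mult_ac)
    qed
    have hm: "0 \<le> K3 * mm u" using hn mm_ge(1)[of u] by (simp add: K3_def)
    have W0: "(yb - mu \<theta> u)\<^sup>2 \<le> 2 * V n \<theta>' u \<omega> + K2 * mm u"
      using V_transfer[OF th th' r, of n u \<omega>] by (simp add: yb_def K2_def mult_ac)
    have "\<bar>indicator A u * (((real n)\<^sup>2 * yb\<^sup>2 - s2) / (real n * (real n - 1))) - (mu \<theta> u)\<^sup>2\<bar>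
        \<le> 2 * B\<^sup>2 / (real n - 1) + eta + (B\<^sup>2 / eta) * (2 * V n \<theta>' u \<omega> + K2 * mm u) + K3 * mm u"
      by (rule abstract_bound[OF _ _ s2 mu_bound[OF th] eta W0 hm ind ind0])
         (use n Ybar_bound[OF th] in \<open>auto simp: yb_def\<close>)
    then show ?thesis by (simp add: F_def Pf D_def G_def K1_def)
  qed
  have iV: "integrable W (\<lambda>u. V n \<theta>' u \<omega>)" by (rule V_int[OF th'])
  have iG: "integrable W G"
    unfolding G_def[abs_def]
    by (intro Bochner_Integration.integrable_add integrable_mult_right iV mm_int
        finite_measure.integrable_const[OF W_finite])
  have iF: "integrable W F"
  proof (rule Bochner_Integration.integrable_bound[where f="\<lambda>u. G u + B\<^sup>2"])
    show "integrable W (\<lambda>u. G u + B\<^sup>2)"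
      by (intro Bochner_Integration.integrable_add iG finite_measure.integrable_const[OF W_finite])
    show "AE x in W. norm (F x) \<le> norm (G x + B\<^sup>2)"
    proof (intro AE_I2)
      fix x
      have "(mu \<theta> x)\<^sup>2 \<le> B\<^sup>2" using power_mono[OF mu_bound[OF th, of x] abs_ge_zero, of 2] by simp
      moreover have a1: "F x - (mu \<theta> x)\<^sup>2 \<le> G x" "(mu \<theta> x)\<^sup>2 - F x \<le> G x" using pt[of x] by (auto simp: abs_le_iff)
      moreover have a2: "0 \<le> (mu \<theta> x)\<^sup>2" "0 \<le> B\<^sup>2" by auto
      ultimately have "F x \<le> G x + B\<^sup>2" "- F x \<le> G x + B\<^sup>2" by linarith+
      then have "\<bar>F x\<bar> \<le> G x + B\<^sup>2" by (simp add: abs_le_iff)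
      then show "norm (F x) \<le> norm (G x + B\<^sup>2)" by simp
    qed
  qed simp
  have "\<bar>Sn W X hn n \<theta> \<omega> - S \<theta>\<bar> = \<bar>\<integral>u. F u - (mu \<theta> u)\<^sup>2 \<partial>W\<bar>"
    unfolding Sn_F S_def by (subst Bochner_Integration.integral_diff[OF iF int_mu2[OF th]]) simp
  also have "\<dots> \<le> (\<integral>u. \<bar>F u - (mu \<theta> u)\<^sup>2\<bar> \<partial>W)" by (rule integral_abs_bound)
  also have "\<dots> \<le> (\<integral>u. G u \<partial>W)"
    by (rule integral_mono[OF _ iG pt]) (intro integrable_abs Bochner_Integration.integrable_diff iF int_mu2 th)
  also have "(\<integral>u. G u \<partial>W) = K1 + (B\<^sup>2 / eta) * (2 * Q n \<theta>' \<omega> + K2 * mom) + K3 * mom"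
  proof -
    have i1: "integrable W (\<lambda>u. K1)" by (rule finite_measure.integrable_const[OF W_finite])
    have i2: "integrable W (\<lambda>u. 2 * V n \<theta>' u \<omega>)" by (intro integrable_mult_right iV)
    have i3: "integrable W (\<lambda>u. K2 * mm u)" by (intro integrable_mult_right mm_int)
    have i23: "integrable W (\<lambda>u. (B\<^sup>2 / eta) * (2 * V n \<theta>' u \<omega> + K2 * mm u))"
      by (intro integrable_mult_right Bochner_Integration.integrable_add i2 i3)
    have i4: "integrable W (\<lambda>u. K3 * mm u)" by (intro integrable_mult_right mm_int)
    have "(\<integral>u. G u \<partial>W) = (\<integral>u. K1 + (B\<^sup>2 / eta) * (2 * V n \<theta>' u \<omega> + K2 * mm u) \<partial>W) + (\<integral>u. K3 * mm u \<partial>W)"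
      unfolding G_def by (rule Bochner_Integration.integral_add[OF Bochner_Integration.integrable_add[OF i1 i23] i4])
    also have "(\<integral>u. K1 + (B\<^sup>2 / eta) * (2 * V n \<theta>' u \<omega> + K2 * mm u) \<partial>W)
        = (\<integral>u. K1 \<partial>W) + (\<integral>u. (B\<^sup>2 / eta) * (2 * V n \<theta>' u \<omega> + K2 * mm u) \<partial>W)"
      by (rule Bochner_Integration.integral_add[OF i1 i23])
    also have "(\<integral>u. (B\<^sup>2 / eta) * (2 * V n \<theta>' u \<omega> + K2 * mm u) \<partial>W)
        = (B\<^sup>2 / eta) * ((\<integral>u. 2 * V n \<theta>' u \<omega> \<partial>W) + (\<integral>u. K2 * mm u \<partial>W))"
      by (simp only: integral_mult_right_zero Bochner_Integration.integral_add[OF i2 i3])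
    also have "(\<integral>u. 2 * V n \<theta>' u \<omega> \<partial>W) = 2 * Q n \<theta>' \<omega>"
      by (simp only: integral_mult_right_zero Q_def)
    also have "(\<integral>u. K2 * mm u \<partial>W) = K2 * mom" by (simp only: integral_mult_right_zero mom_def)
    also have "(\<integral>u. K3 * mm u \<partial>W) = K3 * mom" by (simp only: integral_mult_right_zero mom_def)
    also have "(\<integral>u. K1 \<partial>W) = K1" using W_prob by (simp add: prob_space.prob_space)
    finally show ?thesis .
  qed
  finally show ?thesis by (simp add: K1_def K2_def K3_def mult_ac)
qed

end

context mainsetup
begin

lemma S_cont: "continuous_on \<Theta> S"
  unfolding continuous_on_iff
proof (intro ballI allI impI)
  fix x e assume x: "x \<in> \<Theta>" and e: "(0::real) < e"
  define Lc where "Lc = 4 * B * mom / c^2 + 1"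
  have Lc: "Lc > 0" using B_pos mom_ge c_pos by (simp add: Lc_def add_pos_nonneg)
  show "\<exists>d>0. \<forall>x'\<in>\<Theta>. dist x' x < d \<longrightarrow> dist (S x') (S x) < e"
  proof (intro exI[of _ "e / Lc"] conjI ballI impI)
    show "e / Lc > 0" using e Lc by simp
    fix x' assume x': "x' \<in> \<Theta>" and d: "dist x' x < e / Lc"
    have "dist (S x') (S x) \<le> 4 * B * mom / c^2 * dist x' x"
      using S_lip[OF x' x] by (simp add: dist_real_def)
    also have "\<dots> \<le> Lc * dist x' x" by (intro mult_right_mono) (auto simp: Lc_def)
    also have "\<dots> < Lc * (e / Lc)" using d Lc by (intro mult_strict_left_mono) auto
    also have "\<dots> = e" using Lc by simp
    finally show "dist (S x') (S x) < e" .
  qed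
qed

lemma consistency:
  fixes h :: "nat \<Rightarrow> real" and \<theta>hat :: "nat \<Rightarrow> 'w \<Rightarrow> real \<times> real \<times> real"
  assumes h_pos: "\<And>n. 0 < h n"
    and h_lim: "h \<longlonglongrightarrow> 0"
    and est_meas: "\<And>n. \<theta>hat n \<in> borel_measurable M"
    and est_in: "\<And>n \<omega>. \<omega> \<in> space M \<Longrightarrow> \<theta>hat n \<omega> \<in> \<Theta>"
    and est_argmin: "\<And>n \<omega> \<theta>. \<omega> \<in> space M \<Longrightarrow> \<theta> \<in> \<Theta> \<Longrightarrow>
                       Sn W X (h n) n (\<theta>hat n \<omega>) \<omega> \<le> Sn W X (h n) n \<theta> \<omega>"
    and eps: "\<epsilon> > 0"
  shows "(\<lambda>n. measure M {\<omega> \<in> space M. dist (\<theta>hat n \<omega>) (p0, \<alpha>0, \<beta>0) > \<epsilon>}) \<longlonglongrightarrow> 0"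
proof -
  define \<theta>0 where "\<theta>0 = (p0, \<alpha>0, \<beta>0)"
  have th0: "\<theta>0 \<in> \<Theta>" using theta0 by (simp add: \<theta>0_def)
  define E where "E n = {\<omega> \<in> space M. dist (\<theta>hat n \<omega>) \<theta>0 > \<epsilon>}" for n
  define K where "K = \<Theta> \<inter> {\<theta>. \<epsilon> \<le> dist \<theta> \<theta>0}"
  have EK: "\<theta>hat n \<omega> \<in> K" if "\<omega> \<in> E n" for n \<omega>
    using that est_in by (auto simp: E_def K_def)
  show ?thesis
  proof (cases "K = {}")
    case True
    then have Ee: "E n = {}" for n using EK by blast
    have "(\<lambda>n. measure M (E n)) = (\<lambda>n. 0)" by (simp add: Ee)
    then have "(\<lambda>n. measure M (E n)) \<longlonglongrightarrow> 0" by simp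
    then show ?thesis unfolding E_def \<theta>0_def .
  next
    case False
    have cK: "compact K" unfolding K_def
      by (intro compact_Int_closed Theta_compact closed_Collect_le continuous_on_const
          continuous_on_dist continuous_on_id)
    from compact_attains_inf[OF compact_continuous_image[OF continuous_on_subset[OF S_cont] cK]] False
    obtain sm where sm: "sm \<in> S ` K" "\<forall>t\<in>S ` K. sm \<le> t" by (auto simp: K_def)
    then obtain \<theta>m where \<theta>m: "\<theta>m \<in> K" "sm = S \<theta>m" by auto
    define \<delta> where "\<delta> = S \<theta>m"
    have \<delta>le: "\<delta> \<le> S t" if "t \<in> K" for t using sm \<theta>m that by (auto simp: \<delta>_def)
    have \<delta>: "\<delta> > 0"
    proof -
      have "\<theta>m \<in> \<Theta>" "\<theta>m \<noteq> \<theta>0" using \<theta>m(1) eps by (auto simp: K_def)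
      then show ?thesis unfolding \<delta>_def \<theta>0_def by (intro S_pos) (auto simp: \<theta>0_def)
    qed
    define \<eta> where "\<eta> = \<delta> / 8"
    have \<eta>: "\<eta> > 0" using \<delta> by (simp add: \<eta>_def)
    define r where "r = sqrt (\<delta> * \<eta> * c^4 / (512 * B\<^sup>2 * mom))"
    have rpos: "r > 0" using \<delta> \<eta> c_pos B_pos mom_ge unfolding r_def by (intro real_sqrt_gt_zero) simp
    have r2: "r\<^sup>2 = \<delta> * \<eta> * c^4 / (512 * B\<^sup>2 * mom)"
      unfolding r_def using \<delta> \<eta> c_pos B_pos mom_ge by (intro real_sqrt_pow2) simp
    have rterm: "2 * ((B\<^sup>2 / \<eta>) * (64 * r\<^sup>2 / c^4 * mom)) = \<delta> / 4"
      unfolding r2 using \<eta> c_pos B_pos mom_ge by (simp add: field_simps power2_eq_square)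
    obtain N where N: "N \<subseteq> \<Theta>" "finite N" "\<Theta> \<subseteq> (\<Union>t\<in>N. ball t r)"
    proof (rule compactE_image[OF Theta_compact, of \<Theta> "\<lambda>t. ball t r"])
      show "\<Theta> \<subseteq> (\<Union>t\<in>\<Theta>. ball t r)" using rpos by auto
    qed auto
    define N' where "N' = insert \<theta>0 N"
    have N': "N' \<subseteq> \<Theta>" "finite N'" using N th0 by (auto simp: N'_def)
    define QS where "QS n \<omega> = (\<Sum>t\<in>N'. Q n t \<omega>)" for n \<omega>
    have QS_ge: "Q n t \<omega> \<le> QS n \<omega>" if "t \<in> N'" for n t \<omega>
      unfolding QS_def by (rule member_le_sum[OF that _ N'(2)]) (use Q_bound N'(1) in blast)
    have QSnn: "0 \<le> QS n \<omega>" for n \<omega>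
      unfolding QS_def by (intro sum_nonneg) (use Q_bound N'(1) in blast)
    define \<kappa> where "\<kappa> = \<delta> * \<eta> / (16 * B\<^sup>2)"
    have \<kappa>: "\<kappa> > 0" using \<delta> \<eta> B_pos by (simp add: \<kappa>_def)
    have QS_meas[measurable]: "QS n \<in> borel_measurable M" for n unfolding QS_def[abs_def] by measurable
    have QS_int: "integrable M (QS n)" for n
      unfolding QS_def[abs_def] by (intro Bochner_Integration.integrable_sum Q_int) (use N' in auto)
    have EQS: "(\<integral>\<omega>. QS n \<omega> \<partial>M) \<le> real (card N') * (4 * B\<^sup>2 / real n)" if "1 \<le> n" for n
    proof -
      have "(\<integral>\<omega>. QS n \<omega> \<partial>M) = (\<Sum>t\<in>N'. (\<integral>\<omega>. Q n t \<omega> \<partial>M))"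
        unfolding QS_def by (rule Bochner_Integration.integral_sum) (use N' Q_int in auto)
      also have "\<dots> \<le> (\<Sum>t\<in>N'. 4 * B\<^sup>2 / real n)"
        by (intro sum_mono EQ that) (use N' in auto)
      finally show ?thesis by simp
    qed
    define good where "good n \<longleftrightarrow> 2 \<le> n \<and> 4 * B\<^sup>2 / (real n - 1) + 2 * B\<^sup>2 * h n * mom \<le> \<delta> / 4" for n
    have incl: "E n \<subseteq> {\<omega> \<in> space M. \<kappa> \<le> QS n \<omega>}" if gn: "good n" for n
    proof
      fix \<omega> assume \<omega>E: "\<omega> \<in> E n"
      have \<omega>: "\<omega> \<in> space M" using \<omega>E by (simp add: E_def)
      define th where "th = \<theta>hat n \<omega>"
      have thK: "th \<in> K" using EK[OF \<omega>E] by (simp add: th_def)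
      have thT: "th \<in> \<Theta>" using thK by (simp add: K_def)
      obtain t where t: "t \<in> N" "th \<in> ball t r" using N(3) thT by auto
      have tT: "t \<in> \<Theta>" using t N(1) by auto
      have dt: "dist th t \<le> r" using t by (simp add: dist_commute)
      have n2: "2 \<le> n" using gn by (simp add: good_def)
      define T where "T = (2 * B\<^sup>2 / (real n - 1) + \<eta>) + B\<^sup>2 * h n * mom"
      define R where "R = 64 * r\<^sup>2 / c^4 * mom"
      have b1: "\<bar>Sn W X (h n) n th \<omega> - S th\<bar> \<le> T + (B\<^sup>2 / \<eta>) * (2 * Q n t \<omega> + R)"
        using main_bound[OF thT tT dt n2 \<eta> h_pos[of n], of \<omega>] by (simp add: T_def R_def algebra_simps)
      have b2: "\<bar>Sn W X (h n) n \<theta>0 \<omega> - S \<theta>0\<bar> \<le> T + (B\<^sup>2 / \<eta>) * (2 * Q n \<theta>0 \<omega> + R)"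
        using main_bound[OF th0 th0 _ n2 \<eta> h_pos[of n], of r \<omega>] rpos by (simp add: T_def R_def algebra_simps)
      have S0: "S \<theta>0 = 0" using S_theta0 by (simp add: \<theta>0_def)
      have am: "Sn W X (h n) n th \<omega> \<le> Sn W X (h n) n \<theta>0 \<omega>"
        unfolding th_def by (rule est_argmin[OF \<omega> th0])
      have "\<delta> \<le> S th" by (rule \<delta>le[OF thK])
      also have "\<dots> \<le> 2 * T + (B\<^sup>2 / \<eta>) * (2 * Q n t \<omega> + R) + (B\<^sup>2 / \<eta>) * (2 * Q n \<theta>0 \<omega> + R)"
        using b1 b2 am S0 by (simp add: abs_le_iff)
      also have "\<dots> = 2 * T + 2 * ((B\<^sup>2 / \<eta>) * R) + (2 * B\<^sup>2 / \<eta>) * (Q n t \<omega> + Q n \<theta>0 \<omega>)"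
        by (simp add: algebra_simps)
      also have "2 * ((B\<^sup>2 / \<eta>) * R) = \<delta> / 4" using rterm by (simp add: R_def)
      also have "2 * T \<le> \<delta> / 2"
        using gn by (simp add: good_def T_def \<eta>_def algebra_simps)
      finally have "\<delta> \<le> \<delta> / 2 + \<delta> / 4 + (2 * B\<^sup>2 / \<eta>) * (Q n t \<omega> + Q n \<theta>0 \<omega>)" by simp
      then have "\<delta> / 4 \<le> (2 * B\<^sup>2 / \<eta>) * (Q n t \<omega> + Q n \<theta>0 \<omega>)" by simp
      then have "\<delta> / 4 * (\<eta> / (2 * B\<^sup>2)) \<le> Q n t \<omega> + Q n \<theta>0 \<omega>"
        using \<eta> B_pos by (simp add: field_simps)
      moreover have "Q n t \<omega> + Q n \<theta>0 \<omega> \<le> 2 * QS n \<omega>"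
        using QS_ge[of t n \<omega>] QS_ge[of \<theta>0 n \<omega>] t by (simp add: N'_def)
      ultimately have x1: "\<delta> / 4 * (\<eta> / (2 * B\<^sup>2)) \<le> 2 * QS n \<omega>" by linarith
      define Xv where "Xv = \<delta> / 4 * (\<eta> / (2 * B\<^sup>2))"
      have x2: "\<kappa> = Xv / 2" by (simp add: \<kappa>_def Xv_def field_simps)
      have "\<kappa> \<le> QS n \<omega>" using x1 x2 unfolding Xv_def[symmetric] by linarith
      then show "\<omega> \<in> {\<omega> \<in> space M. \<kappa> \<le> QS n \<omega>}" using \<omega> by simp
    qed
    define C where "C = real (card N') * 4 * B\<^sup>2 / \<kappa>"
    have bound: "measure M (E n) \<le> C / real n" if gn: "good n" for n
    proof -
      have n1: "1 \<le> n" using gn by (simp add: good_def)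
      have "measure M (E n) \<le> measure M {\<omega> \<in> space M. \<kappa> \<le> QS n \<omega>}"
        by (rule finite_measure.finite_measure_mono[OF M_finite incl[OF gn]]) measurable
      also have "\<dots> \<le> (\<integral>\<omega>. QS n \<omega> \<partial>M) / \<kappa>"
        by (rule integral_Markov_inequality_measure[OF QS_int, of "space M"])
           (use \<kappa> QSnn in auto)
      also have "\<dots> \<le> real (card N') * (4 * B\<^sup>2 / real n) / \<kappa>"
        using \<kappa> by (intro divide_right_mono EQS[OF n1]) simp
      also have "\<dots> = C / real n" by (simp add: C_def mult_ac)
      finally show ?thesis .
    qed
    have ev_good: "eventually good sequentially"
    proof -
      have hl: "(\<lambda>n. 2 * B\<^sup>2 * mom * h n) \<longlonglongrightarrow> 0"
        using tendsto_mult_right_zero[OF h_lim, of "2 * B\<^sup>2 * mom"] by simp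
      have e1: "eventually (\<lambda>n. 2 * B\<^sup>2 * mom * h n < \<delta> / 8) sequentially"
        using order_tendstoD(2)[OF hl, of "\<delta>/8"] \<delta> by simp
      define N0 where "N0 = nat \<lceil>32 * B\<^sup>2 / \<delta>\<rceil> + 2"
      have e2: "eventually (\<lambda>n. N0 \<le> n) sequentially" by (rule eventually_ge_at_top)
      show ?thesis
      proof (rule eventually_mono[OF eventually_conj[OF e1 e2]])
        fix n assume a: "2 * B\<^sup>2 * mom * h n < \<delta> / 8 \<and> N0 \<le> n"
        have n2: "2 \<le> n" using a by (simp add: N0_def)
        have "32 * B\<^sup>2 / \<delta> \<le> real n - 1"
        proof -
          have "32 * B\<^sup>2 / \<delta> \<le> real (nat \<lceil>32 * B\<^sup>2 / \<delta>\<rceil>)" by linarith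
          also have "\<dots> \<le> real n - 1" using a by (simp add: N0_def)
          finally show ?thesis .
        qed
        then have f1: "4 * B\<^sup>2 / (real n - 1) \<le> \<delta> / 8"
          using \<delta> n2 B_pos by (simp add: field_simps)
        have f2: "2 * B\<^sup>2 * h n * mom \<le> \<delta> / 8"
        proof -
          have "2 * B\<^sup>2 * h n * mom = 2 * B\<^sup>2 * mom * h n" by (simp only: mult_ac)
          then show ?thesis using a by linarith
        qed
        have "4 * B\<^sup>2 / (real n - 1) + 2 * B\<^sup>2 * h n * mom \<le> \<delta> / 4" using f1 f2 by linarith
        then show "good n" using n2 by (simp add: good_def)
      qed
    qed
    have lim: "(\<lambda>n. C / real n) \<longlonglongrightarrow> 0" by (rule lim_const_over_n)
    have "(\<lambda>n. measure M (E n)) \<longlonglongrightarrow> 0"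
    proof (rule tendsto_sandwich[OF _ _ tendsto_const lim])
      show "eventually (\<lambda>n. 0 \<le> measure M (E n)) sequentially" by simp
      show "eventually (\<lambda>n. measure M (E n) \<le> C / real n) sequentially"
        by (rule eventually_mono[OF ev_good bound])
    qed
    then show ?thesis unfolding E_def \<theta>0_def .
  qed
qed

end

theorem theorem2:
  fixes \<Theta> :: "(real \<times> real \<times> real) set"
    and f :: "real \<Rightarrow> real" and bet L :: real
    and W :: "real measure"
    and M :: "'w measure" and X :: "nat \<Rightarrow> 'w \<Rightarrow> real"
    and p0 \<alpha>0 \<beta>0 :: real and h :: "nat \<Rightarrow> real"
    and \<theta>hat :: "nat \<Rightarrow> 'w \<Rightarrow> real \<times> real \<times> real"
  assumes Theta_compact: "compact \<Theta>"
    and Theta_sub: "\<Theta> \<subseteq> {(p, a, b). 0 < p \<and> p < 1/2 \<and> a \<noteq> b}"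
    and f_meas: "f \<in> borel_measurable borel"
    and f_nonneg: "\<And>x. 0 \<le> f x"
    and f_dens: "(\<integral>\<^sup>+ x. ennreal (f x) \<partial>lborel) = 1"
    and f_symm: "\<And>x. f (- x) = f x"
    and f_L2: "integrable lborel (\<lambda>x. (f x)\<^sup>2)"
    and bet_pos: "0 < bet" and L_pos: "0 < L"
    and f_smooth: "(\<integral>\<^sup>+ u. ennreal ((cmod (fourier_tr f u))\<^sup>2 * \<bar>u\<bar> powr (2 * bet)) \<partial>lborel)
                     \<le> ennreal L"
    and W_prob: "prob_space W"
    and W_sets: "sets W = sets borel"
    and W_ac: "absolutely_continuous lborel W"
    and W_support: "\<And>U. open U \<Longrightarrow> U \<noteq> {} \<Longrightarrow> emeasure W U > 0"
    and W_moment: "integrable W (\<lambda>u. 1 + \<bar>u\<bar> + u\<^sup>2 + \<bar>u\<bar> ^ 3)"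
    and theta0: "(p0, \<alpha>0, \<beta>0) \<in> \<Theta>"
    and M_prob: "prob_space M"
    and X_indep: "prob_space.indep_vars M (\<lambda>_. borel) X UNIV"
    and X_distr: "\<And>i. distributed M lborel (X i)
                    (\<lambda>x. ennreal (p0 * f (x - \<alpha>0) + (1 - p0) * f (x - \<beta>0)))"
    and h_pos: "\<And>n. 0 < h n"
    and h_lim: "h \<longlonglongrightarrow> 0"
    and est_meas: "\<And>n. \<theta>hat n \<in> borel_measurable M"
    and est_in: "\<And>n \<omega>. \<omega> \<in> space M \<Longrightarrow> \<theta>hat n \<omega> \<in> \<Theta>"
    and est_argmin: "\<And>n \<omega> \<theta>. \<omega> \<in> space M \<Longrightarrow> \<theta> \<in> \<Theta> \<Longrightarrow>
                       Sn W X (h n) n (\<theta>hat n \<omega>) \<omega> \<le> Sn W X (h n) n \<theta> \<omega>"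
  shows "\<forall>\<epsilon>>0. (\<lambda>n. measure M {\<omega> \<in> space M. dist (\<theta>hat n \<omega>) (p0, \<alpha>0, \<beta>0) > \<epsilon>})
                 \<longlonglongrightarrow> 0"
proof -
  have p0: "0 < p0" "p0 < 1/2" using theta0 Theta_sub by auto
  have ms: "mainsetup f M X p0 \<alpha>0 \<beta>0 \<Theta> W"
    unfolding mainsetup_def mainsetup_axioms_def mixsetup_def
    using f_meas f_nonneg f_dens f_symm M_prob X_distr p0 Theta_compact Theta_sub theta0
      W_prob W_sets W_support W_moment X_indep
    by auto
  show ?thesis
    by (intro allI impI) (rule mainsetup.consistency[OF ms h_pos h_lim est_meas est_in est_argmin])
qed

end
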